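(* Let $\mathscr{R}$ be a von Neumann algebra. If $\mathscr{I}$ is a norm-closed left ideal of $\mathscr{R}$ which is finitely generated, then $\mathscr{I}$ is weak-operator closed.
   Context: A left ideal $\mathscr{I}$ of $\mathscr{R}$ is finitely generated if it is the smallest left ideal of $\mathscr{R}$ containing some finite subset of $\mathscr{R}$ (generation in the purely algebraic sense). *)

theory Defs
  imports "HOL-Analysis.Analysis"
begin

text \<open>Complex Hilbert spaces are not in the distribution: a complex Hilbert space is
  a real Banach space 'h together with a complex scalar multiplication extending the real one
  and a complex inner product (linear in the first argument) inducing the norm.\<close>

locale complex_hilbert_space =
  fixes scaleC :: "complex \<Rightarrow> 'h::banach \<Rightarrow> 'h"
    and cinner :: "'h \<Rightarrow> 'h \<Rightarrow> complex"
  assumes scaleC_add_right: "scaleC a (x + y) = scaleC a x + scaleC a y"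
    and scaleC_add_left: "scaleC (a + b) x = scaleC a x + scaleC b x"
    and scaleC_scaleC: "scaleC a (scaleC b x) = scaleC (a * b) x"
    and scaleC_one: "scaleC 1 x = x"
    and scaleR_scaleC: "scaleR r x = scaleC (complex_of_real r) x"
    and cinner_add_left: "cinner (x + y) z = cinner x z + cinner y z"
    and cinner_scaleC_left: "cinner (scaleC a x) y = a * cinner x y"
    and cinner_commute: "cinner y x = cnj (cinner x y)"
    and cinner_self_norm: "cinner x x = complex_of_real ((norm x)\<^sup>2)"

definition bounded_op :: "(complex \<Rightarrow> 'h::banach \<Rightarrow> 'h) \<Rightarrow> ('h \<Rightarrow> 'h) \<Rightarrow> bool" where
  "bounded_op scaleC T \<longleftrightarrow>
     (\<forall>x y. T (x + y) = T x + T y) \<and>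
     (\<forall>a x. T (scaleC a x) = scaleC a (T x)) \<and>
     (\<exists>K. \<forall>x. norm (T x) \<le> K * norm x)"

text \<open>Closedness in the weak-operator topology of B(H): every bounded operator lying in the
  WOT-closure (every basic WOT neighbourhood meets S) belongs to S.\<close>
definition wot_closed ::
  "(complex \<Rightarrow> 'h::banach \<Rightarrow> 'h) \<Rightarrow> ('h \<Rightarrow> 'h \<Rightarrow> complex) \<Rightarrow> ('h \<Rightarrow> 'h) set \<Rightarrow> bool" where
  "wot_closed scaleC cinner S \<longleftrightarrow>
     (\<forall>T. bounded_op scaleC T \<and>
          (\<forall>\<epsilon>>0. \<forall>P. finite P \<longrightarrow>
              (\<exists>A\<in>S. \<forall>(x, y)\<in>P. cmod (cinner (T x - A x) y) < \<epsilon>))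
        \<longrightarrow> T \<in> S)"

definition norm_closed :: "(complex \<Rightarrow> 'h::banach \<Rightarrow> 'h) \<Rightarrow> ('h \<Rightarrow> 'h) set \<Rightarrow> bool" where
  "norm_closed scaleC S \<longleftrightarrow>
     (\<forall>T. bounded_op scaleC T \<and>
          (\<forall>\<epsilon>>0. \<exists>A\<in>S. \<forall>x. norm (T x - A x) \<le> \<epsilon> * norm x)
        \<longrightarrow> T \<in> S)"

definition von_neumann_algebra ::
  "(complex \<Rightarrow> 'h::banach \<Rightarrow> 'h) \<Rightarrow> ('h \<Rightarrow> 'h \<Rightarrow> complex) \<Rightarrow> ('h \<Rightarrow> 'h) set \<Rightarrow> bool" where
  "von_neumann_algebra scaleC cinner R \<longleftrightarrow>
     (\<forall>T\<in>R. bounded_op scaleC T) \<and>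
     id \<in> R \<and>
     (\<forall>S\<in>R. \<forall>T\<in>R. (\<lambda>x. S x + T x) \<in> R) \<and>
     (\<forall>a. \<forall>T\<in>R. (\<lambda>x. scaleC a (T x)) \<in> R) \<and>
     (\<forall>S\<in>R. \<forall>T\<in>R. S \<circ> T \<in> R) \<and>
     (\<forall>T\<in>R. \<exists>S\<in>R. \<forall>x y. cinner (T x) y = cinner x (S y)) \<and>
     wot_closed scaleC cinner R"

definition left_ideal ::
  "(complex \<Rightarrow> 'h::banach \<Rightarrow> 'h) \<Rightarrow> ('h \<Rightarrow> 'h) set \<Rightarrow> ('h \<Rightarrow> 'h) set \<Rightarrow> bool" where
  "left_ideal scaleC R I \<longleftrightarrow>
     I \<subseteq> R \<and>
     (\<lambda>x. 0) \<in> I \<and>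
     (\<forall>S\<in>I. \<forall>T\<in>I. (\<lambda>x. S x + T x) \<in> I) \<and>
     (\<forall>a. \<forall>T\<in>I. (\<lambda>x. scaleC a (T x)) \<in> I) \<and>
     (\<forall>A\<in>R. \<forall>T\<in>I. A \<circ> T \<in> I)"

definition left_ideal_generated ::
  "(complex \<Rightarrow> 'h::banach \<Rightarrow> 'h) \<Rightarrow> ('h \<Rightarrow> 'h) set \<Rightarrow> ('h \<Rightarrow> 'h) set \<Rightarrow> ('h \<Rightarrow> 'h) set" where
  "left_ideal_generated scaleC R F = \<Inter>{J. left_ideal scaleC R J \<and> F \<subseteq> J}"

definition finitely_generated_left_ideal ::
  "(complex \<Rightarrow> 'h::banach \<Rightarrow> 'h) \<Rightarrow> ('h \<Rightarrow> 'h) set \<Rightarrow> ('h \<Rightarrow> 'h) set \<Rightarrow> bool" where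
  "finitely_generated_left_ideal scaleC R I \<longleftrightarrow>
     (\<exists>F. finite F \<and> F \<subseteq> R \<and> I = left_ideal_generated scaleC R F)"

end

theory Submission
  imports Defs
begin

context complex_hilbert_space
begin

lemma scaleC_zero_left[simp]: "scaleC 0 x = 0"
proof -
  have "scaleC (0+0) x = scaleC 0 x + scaleC 0 x" by (rule scaleC_add_left)
  then show ?thesis by simp
qed

lemma scaleC_zero_right[simp]: "scaleC a 0 = 0"
proof -
  have "scaleC a (0+0) = scaleC a 0 + scaleC a 0" by (rule scaleC_add_right)
  then show ?thesis by simp
qed

lemma scaleC_minus_one: "scaleC (-1) x = - x"
proof -
  have "scaleC (1 + -1) x = scaleC 1 x + scaleC (-1) x" by (rule scaleC_add_left)
  then have "0 = x + scaleC (-1) x" by (simp add: scaleC_one)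
  then show ?thesis by (simp add: eq_neg_iff_add_eq_0 add.commute)
qed

lemma scaleC_minus_right: "scaleC a (- x) = - scaleC a x"
proof -
  have "scaleC a (x + - x) = scaleC a x + scaleC a (-x)" by (rule scaleC_add_right)
  then have "0 = scaleC a x + scaleC a (-x)" by simp
  then show ?thesis by (simp add: eq_neg_iff_add_eq_0 add.commute)
qed

lemma scaleC_diff_right: "scaleC a (x - y) = scaleC a x - scaleC a y"
  using scaleC_add_right[of a x "-y"] scaleC_minus_right[of a y] by simp

lemma cinner_zero_left[simp]: "cinner 0 y = 0"
proof -
  have "cinner (0+0) y = cinner 0 y + cinner 0 y" by (rule cinner_add_left)
  then show ?thesis by simp
qed

lemma cinner_minus_left: "cinner (- x) y = - cinner x y"
proof -
  have "cinner (x + - x) y = cinner x y + cinner (-x) y" by (rule cinner_add_left)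
  then show ?thesis by (simp add: eq_neg_iff_add_eq_0 add.commute)
qed

lemma cinner_diff_left: "cinner (x - y) z = cinner x z - cinner y z"
  using cinner_add_left[of x "-y" z] cinner_minus_left[of y z] by simp

lemma cinner_add_right: "cinner x (y + z) = cinner x y + cinner x z"
  by (metis cinner_add_left cinner_commute complex_cnj_add)

lemma cinner_zero_right[simp]: "cinner x 0 = 0"
  by (metis cinner_commute cinner_zero_left complex_cnj_zero)

lemma cinner_minus_right: "cinner x (- y) = - cinner x y"
  by (metis cinner_commute cinner_minus_left complex_cnj_minus)

lemma cinner_diff_right: "cinner x (y - z) = cinner x y - cinner x z"
  by (metis cinner_commute cinner_diff_left complex_cnj_diff)

lemma cinner_scaleC_right: "cinner x (scaleC a y) = cnj a * cinner x y"
  by (metis cinner_commute cinner_scaleC_left complex_cnj_cnj complex_cnj_mult)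

lemma cinner_scaleR_left: "cinner (r *\<^sub>R x) y = complex_of_real r * cinner x y"
  by (simp add: scaleR_scaleC cinner_scaleC_left)

lemma cinner_scaleR_right: "cinner x (r *\<^sub>R y) = complex_of_real r * cinner x y"
  by (simp add: scaleR_scaleC cinner_scaleC_right)

lemma cinner_sum_left: "cinner (\<Sum>i\<in>A. f i) y = (\<Sum>i\<in>A. cinner (f i) y)"
  by (induction A rule: infinite_finite_induct) (auto simp: cinner_add_left)

lemma cinner_sum_right: "cinner y (\<Sum>i\<in>A. f i) = (\<Sum>i\<in>A. cinner y (f i))"
  by (induction A rule: infinite_finite_induct) (auto simp: cinner_add_right)

lemma Re_cinner_self: "Re (cinner x x) = (norm x)\<^sup>2"
  by (simp add: cinner_self_norm)

lemma Im_cinner_self: "Im (cinner x x) = 0"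
  by (simp add: cinner_self_norm)

lemma cinner_self_zero: "cinner x x = 0 \<longleftrightarrow> x = 0"
  by (simp add: cinner_self_norm)

lemma cinner_commute_Re: "Re (cinner y x) = Re (cinner x y)"
  by (simp add: cinner_commute[of y x])

lemma norm_add_sq: "(norm (x + y))\<^sup>2 = (norm x)\<^sup>2 + (norm y)\<^sup>2 + 2 * Re (cinner x y)"
proof -
  have "cinner (x+y) (x+y) = cinner x x + cinner x y + cinner y x + cinner y y"
    by (simp add: cinner_add_left cinner_add_right)
  then have "Re (cinner (x+y) (x+y)) = Re (cinner x x) + Re (cinner y y) + 2 * Re (cinner x y)"
    using cinner_commute_Re[of x y] by simp
  then show ?thesis by (simp add: Re_cinner_self)
qed

lemma norm_diff_sq: "(norm (x - y))\<^sup>2 = (norm x)\<^sup>2 + (norm y)\<^sup>2 - 2 * Re (cinner x y)"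
  using norm_add_sq[of x "-y"] by (simp add: cinner_minus_right)

lemma norm_scaleC: "norm (scaleC a x) = cmod a * norm x"
proof -
  have "(norm (scaleC a x))\<^sup>2 = Re (cinner (scaleC a x) (scaleC a x))" by (simp add: Re_cinner_self)
  also have "\<dots> = Re (a * cnj a * cinner x x)"
    by (simp only: cinner_scaleC_left cinner_scaleC_right mult.assoc mult.left_commute[of a "cnj a"])
  also have "a * cnj a = complex_of_real ((cmod a)\<^sup>2)" by (simp only: complex_norm_square)
  also have "Re (complex_of_real ((cmod a)\<^sup>2) * cinner x x) = (cmod a)\<^sup>2 * (norm x)\<^sup>2"
    by (simp add: cinner_self_norm)
  finally have "(norm (scaleC a x))\<^sup>2 = (cmod a * norm x)\<^sup>2" by (simp add: power_mult_distrib)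
  then show ?thesis by (simp add: power2_eq_iff_nonneg)
qed

lemma Re_cinner_CS: "Re (cinner x y) \<le> norm x * norm y"
proof (cases "y = 0")
  case True then show ?thesis by simp
next
  case False
  define r where "r = Re (cinner x y)"
  define t where "t = - r / (norm y)\<^sup>2"
  have ny: "(norm y)\<^sup>2 > 0" using False by simp
  have "0 \<le> (norm (x + t *\<^sub>R y))\<^sup>2" by simp
  also have "\<dots> = (norm x)\<^sup>2 + t\<^sup>2 * (norm y)\<^sup>2 + 2 * t * r"
    by (simp add: norm_add_sq cinner_scaleR_right r_def power_mult_distrib)
  also have "\<dots> = (norm x)\<^sup>2 - r\<^sup>2 / (norm y)\<^sup>2"
    using ny by (simp add: t_def field_simps power2_eq_square)
  finally have "r\<^sup>2 \<le> (norm x)\<^sup>2 * (norm y)\<^sup>2" using ny by (simp add: field_simps)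
  then have "r\<^sup>2 \<le> (norm x * norm y)\<^sup>2" by (simp add: power_mult_distrib)
  then have "\<bar>r\<bar> \<le> \<bar>norm x * norm y\<bar>" by (simp only: abs_le_square_iff)
  then show ?thesis by (simp add: r_def)
qed

lemma cinner_CS: "cmod (cinner x y) \<le> norm x * norm y"
proof (cases "cinner x y = 0")
  case True then show ?thesis by simp
next
  case False
  define u where "u = cnj (cinner x y) / complex_of_real (cmod (cinner x y))"
  have cu: "cmod u = 1" using False by (simp add: u_def norm_divide)
  have cc: "cnj (cinner x y) * cinner x y = complex_of_real ((cmod (cinner x y))\<^sup>2)"
    by (simp only: complex_norm_square[symmetric] of_real_power mult.commute[of "cnj (cinner x y)"])
  have "cinner (scaleC u x) y = cnj (cinner x y) * cinner x y / complex_of_real (cmod (cinner x y))"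
    by (simp add: u_def cinner_scaleC_left)
  also have "\<dots> = complex_of_real (cmod (cinner x y))"
    using False by (simp only: cc) (simp add: power2_eq_square)
  finally have "Re (cinner (scaleC u x) y) = cmod (cinner x y)" by simp
  moreover have "Re (cinner (scaleC u x) y) \<le> norm (scaleC u x) * norm y" by (rule Re_cinner_CS)
  ultimately show ?thesis by (simp add: norm_scaleC cu)
qed

lemma bounded_linear_cinner_left: "bounded_linear (\<lambda>x. cinner x y)"
proof (rule bounded_linear_intro[where K = "norm y"])
  show "cinner (x + z) y = cinner x y + cinner z y" for x z by (rule cinner_add_left)
  show "cinner (r *\<^sub>R x) y = r *\<^sub>R cinner x y" for r x
    by (simp add: cinner_scaleR_left scaleR_conv_of_real)
  show "norm (cinner x y) \<le> norm x * norm y" for x by (rule cinner_CS)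
qed

lemma bounded_linear_cinner_right: "bounded_linear (\<lambda>y. cinner x y)"
proof (rule bounded_linear_intro[where K = "norm x"])
  show "cinner x (y + z) = cinner x y + cinner x z" for y z by (rule cinner_add_right)
  show "cinner x (r *\<^sub>R y) = r *\<^sub>R cinner x y" for r y
    by (simp add: cinner_scaleR_right scaleR_conv_of_real)
  show "norm (cinner x y) \<le> norm y * norm x" for y using cinner_CS[of x y] by (simp add: mult.commute)
qed

lemma bounded_linear_scaleC: "bounded_linear (scaleC a)"
proof (rule bounded_linear_intro[where K = "cmod a"])
  show "scaleC a (x + y) = scaleC a x + scaleC a y" for x y by (rule scaleC_add_right)
  show "scaleC a (r *\<^sub>R x) = r *\<^sub>R scaleC a x" for r x
    by (simp add: scaleR_scaleC scaleC_scaleC mult.commute)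
  show "norm (scaleC a x) \<le> norm x * cmod a" for x by (simp add: norm_scaleC mult.commute)
qed

lemma cinner_eq_zero_all: "(\<And>y. cinner x y = 0) \<Longrightarrow> x = 0"
  using cinner_self_zero by blast

end

context complex_hilbert_space
begin

abbreviation bop where "bop T \<equiv> bounded_op scaleC T"

lemma bop_add: "bop T \<Longrightarrow> T (x + y) = T x + T y"
  by (simp add: bounded_op_def)

lemma bop_scaleC: "bop T \<Longrightarrow> T (scaleC a x) = scaleC a (T x)"
  by (simp add: bounded_op_def)

lemma bop_zero[simp]: "bop T \<Longrightarrow> T 0 = 0"
  using bop_add[of T 0 0] by simp

lemma bop_minus: "bop T \<Longrightarrow> T (- x) = - T x"
  using bop_add[of T x "-x"] by (simp add: eq_neg_iff_add_eq_0 add.commute)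

lemma bop_diff: "bop T \<Longrightarrow> T (x - y) = T x - T y"
  using bop_add[of T x "-y"] bop_minus[of T y] by simp

lemma bop_scaleR: "bop T \<Longrightarrow> T (r *\<^sub>R x) = r *\<^sub>R T x"
  by (simp add: scaleR_scaleC bop_scaleC)

lemma bop_bound: assumes "bop T" obtains K where "K > 0" "\<And>x. norm (T x) \<le> K * norm x"
proof -
  obtain K where K: "\<And>x. norm (T x) \<le> K * norm x" using assms by (auto simp: bounded_op_def)
  show ?thesis
  proof (rule that[of "max K 1"])
    show "norm (T x) \<le> max K 1 * norm x" for x
      using K[of x] mult_right_mono[of K "max K 1" "norm x"] by simp
  qed simp
qed

lemma bop_linear: "bop T \<Longrightarrow> bounded_linear T"
proof -
  assume T: "bop T"
  then obtain K where K: "\<And>x. norm (T x) \<le> K * norm x" using bop_bound by blast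
  show ?thesis
    by (rule bounded_linear_intro[where K=K]) (auto simp: bop_add[OF T] bop_scaleR[OF T] K mult.commute)
qed

lemma bop_sum: "bop T \<Longrightarrow> T (\<Sum>i\<in>A. f i) = (\<Sum>i\<in>A. T (f i))"
  by (induction A rule: infinite_finite_induct) (auto simp: bop_add)

lemma bop_cont: "bop T \<Longrightarrow> X \<longlonglongrightarrow> l \<Longrightarrow> (\<lambda>n. T (X n)) \<longlonglongrightarrow> T l"
  using bop_linear bounded_linear.tendsto by blast

lemma bop_id[simp]: "bop id" "bop (\<lambda>x. x)"
  by (auto simp: bounded_op_def intro: exI[of _ 1])

lemma bop_comp: "bop S \<Longrightarrow> bop T \<Longrightarrow> bop (S \<circ> T)"
proof -
  assume S: "bop S" and T: "bop T"
  obtain K where K: "K > 0" "\<And>x. norm (S x) \<le> K * norm x" using bop_bound[OF S] by blast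
  obtain L where L: "L > 0" "\<And>x. norm (T x) \<le> L * norm x" using bop_bound[OF T] by blast
  have "norm (S (T x)) \<le> (K * L) * norm x" for x
  proof -
    have "norm (S (T x)) \<le> K * norm (T x)" by (rule K(2))
    also have "\<dots> \<le> K * (L * norm x)" using L(2)[of x] K(1) by (simp add: mult_left_mono)
    finally show ?thesis by (simp add: mult.assoc)
  qed
  then show ?thesis unfolding bounded_op_def
    using bop_add[OF S] bop_add[OF T] bop_scaleC[OF S] bop_scaleC[OF T] by auto
qed

lemma bop_comp': "bop S \<Longrightarrow> bop T \<Longrightarrow> bop (\<lambda>x. S (T x))"
  using bop_comp[of S T] by (simp add: comp_def)

lemma bop_plus: "bop S \<Longrightarrow> bop T \<Longrightarrow> bop (\<lambda>x. S x + T x)"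
proof -
  assume S: "bop S" and T: "bop T"
  obtain K where K: "K > 0" "\<And>x. norm (S x) \<le> K * norm x" using bop_bound[OF S] by blast
  obtain L where L: "L > 0" "\<And>x. norm (T x) \<le> L * norm x" using bop_bound[OF T] by blast
  have "norm (S x + T x) \<le> (K + L) * norm x" for x
    using K(2)[of x] L(2)[of x] norm_triangle_ineq[of "S x" "T x"] by (simp add: distrib_right)
  then show ?thesis unfolding bounded_op_def
  proof (intro conjI allI exI)
    show "S (x + y) + T (x + y) = S x + T x + (S y + T y)" for x y
      by (simp add: bop_add[OF S] bop_add[OF T] algebra_simps)
    show "S (scaleC a x) + T (scaleC a x) = scaleC a (S x + T x)" for a x
      by (simp add: bop_scaleC[OF S] bop_scaleC[OF T] scaleC_add_right)
  qed
qed

lemma bop_sC: "bop T \<Longrightarrow> bop (\<lambda>x. scaleC a (T x))"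
proof -
  assume T: "bop T"
  obtain L where L: "L > 0" "\<And>x. norm (T x) \<le> L * norm x" using bop_bound[OF T] by blast
  have "norm (scaleC a (T x)) \<le> (cmod a * L) * norm x" for x
    using L(2)[of x] by (simp add: norm_scaleC mult.assoc mult_left_mono)
  then show ?thesis unfolding bounded_op_def
  proof (intro conjI allI exI)
    show "scaleC a (T (x + y)) = scaleC a (T x) + scaleC a (T y)" for x y
      by (simp add: bop_add[OF T] scaleC_add_right)
    show "scaleC a (T (scaleC b x)) = scaleC b (scaleC a (T x))" for b x
      by (simp add: bop_scaleC[OF T] scaleC_scaleC mult.commute)
  qed
qed

lemma bop_sR: "bop T \<Longrightarrow> bop (\<lambda>x. r *\<^sub>R T x)"
  using bop_sC[of T "complex_of_real r"] by (simp add: scaleR_scaleC)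

lemma bop_minus_op: "bop T \<Longrightarrow> bop (\<lambda>x. - T x)"
  using bop_sR[of T "-1"] by simp

lemma bop_diff_op: "bop S \<Longrightarrow> bop T \<Longrightarrow> bop (\<lambda>x. S x - T x)"
  using bop_plus[of S "\<lambda>x. - T x"] bop_minus_op[of T] by simp

lemma bop_zero_op[simp]: "bop (\<lambda>x. 0)"
  by (auto simp: bounded_op_def intro: exI[of _ 0])

lemma bop_sum_op: "(\<And>i. i \<in> A \<Longrightarrow> bop (T i)) \<Longrightarrow> bop (\<lambda>x. \<Sum>i\<in>A. T i x)"
proof (induction A rule: infinite_finite_induct)
  case (insert a A)
  then show ?case using bop_plus[of "T a" "\<lambda>x. \<Sum>i\<in>A. T i x"] by simp
qed auto

lemma bop_pow: "bop T \<Longrightarrow> bop (T ^^ n)"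
proof (induction n)
  case 0 then show ?case by (simp add: id_def)
next
  case (Suc n) then show ?case using bop_comp[of T "T^^n"] by (simp add: comp_def)
qed

lemma bop_pow_sum: "bop T \<Longrightarrow> bop (\<lambda>x. \<Sum>j<n. (T ^^ j) x)"
  by (rule bop_sum_op) (simp add: bop_pow)

lemma pow_commute: "(T ^^ n) (T x) = T ((T ^^ n) x)"
  by (simp add: funpow_swap1)

definition sa :: "('h \<Rightarrow> 'h) \<Rightarrow> bool" where
  "sa T \<longleftrightarrow> (\<forall>x y. cinner (T x) y = cinner x (T y))"

lemma saD: "sa T \<Longrightarrow> cinner (T x) y = cinner x (T y)"
  by (simp add: sa_def)

lemma sa_real: "sa T \<Longrightarrow> Im (cinner (T x) x) = 0"
proof -
  assume "sa T"
  then have "cinner (T x) x = cnj (cinner (T x) x)"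
    using saD[of T x x] cinner_commute[of x "T x"] by simp
  then show ?thesis by (metis Reals_cnj_iff complex_is_Real_iff)
qed

lemma sa_pow: "sa T \<Longrightarrow> sa (T ^^ n)"
proof (induction n)
  case 0 then show ?case by (simp add: sa_def)
next
  case (Suc n)
  have "cinner (T ((T^^n) x)) y = cinner x (T ((T^^n) y))" for x y
    using saD[OF Suc.prems, of "(T^^n) x" y] saD[OF Suc.IH[OF Suc.prems], of x "T y"]
    by (simp add: pow_commute)
  then show ?case by (simp add: sa_def)
qed

lemma sa_id_minus: "bop T \<Longrightarrow> sa T \<Longrightarrow> sa (\<lambda>x. x - T x)"
  by (simp add: sa_def cinner_diff_left cinner_diff_right saD)

definition pos01 :: "('h \<Rightarrow> 'h) \<Rightarrow> bool" where
  "pos01 T \<longleftrightarrow> bop T \<and> sa T \<and> (\<forall>x. 0 \<le> Re (cinner (T x) x) \<and> Re (cinner (T x) x) \<le> (norm x)\<^sup>2)"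

lemma numrad:
  assumes T: "bop T" "sa T" and b: "\<And>z. \<bar>Re (cinner (T z) z)\<bar> \<le> (norm z)\<^sup>2"
  shows "norm (T x) \<le> norm x"
proof (cases "T x = 0")
  case True then show ?thesis by simp
next
  case False
  have key: "4 * Re (cinner (T x) y) \<le> 2 * (norm x)\<^sup>2 + 2 * (norm y)\<^sup>2" for y
  proof -
    have e1: "Re (cinner (T (x+y)) (x+y)) = Re (cinner (T x) x) + Re (cinner (T y) y) + 2 * Re (cinner (T x) y)"
      using saD[OF T(2), of y x] cinner_commute_Re[of x "T y"] cinner_commute_Re[of y "T x"]
      by (simp add: bop_add[OF T(1)] cinner_add_left cinner_add_right)
    have e2: "Re (cinner (T (x-y)) (x-y)) = Re (cinner (T x) x) + Re (cinner (T y) y) - 2 * Re (cinner (T x) y)"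
      using saD[OF T(2), of y x] cinner_commute_Re[of x "T y"] cinner_commute_Re[of y "T x"]
      by (simp add: bop_diff[OF T(1)] cinner_diff_left cinner_diff_right)
    have "4 * Re (cinner (T x) y) = Re (cinner (T (x+y)) (x+y)) - Re (cinner (T (x-y)) (x-y))"
      using e1 e2 by simp
    also have "\<dots> \<le> (norm (x+y))\<^sup>2 + (norm (x-y))\<^sup>2"
      using b[of "x+y"] b[of "x-y"] by linarith
    also have "\<dots> = 2 * (norm x)\<^sup>2 + 2 * (norm y)\<^sup>2" by (simp add: norm_add_sq norm_diff_sq)
    finally show ?thesis .
  qed
  define t where "t = norm x / norm (T x)"
  have nt: "norm (T x) > 0" using False by simp
  have "Re (cinner (T x) (t *\<^sub>R T x)) = t * (norm (T x))\<^sup>2"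
    by (simp add: cinner_scaleR_right Re_cinner_self)
  also have "\<dots> = norm x * norm (T x)" using nt by (simp add: t_def power2_eq_square)
  finally have r: "Re (cinner (T x) (t *\<^sub>R T x)) = norm x * norm (T x)" .
  have ny: "norm (t *\<^sub>R T x) = norm x" using nt by (simp add: t_def)
  from key[of "t *\<^sub>R T x"] r ny have "norm x * norm (T x) \<le> (norm x)\<^sup>2" by simp
  then have "norm x * norm (T x) \<le> norm x * norm x" by (simp add: power2_eq_square)
  moreover have "norm x > 0" using nt False
    by (metis assms(1) bop_zero zero_less_norm_iff)
  ultimately show ?thesis by simp
qed

lemma pos01_norm: "pos01 T \<Longrightarrow> norm (T x) \<le> norm x"
  unfolding pos01_def by (rule numrad) auto

lemma pos01_compl: "pos01 T \<Longrightarrow> pos01 (\<lambda>x. x - T x)"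
  unfolding pos01_def
  by (auto simp: bop_diff_op sa_id_minus cinner_diff_left Re_cinner_self)

lemma pos01_pow_norm: "pos01 T \<Longrightarrow> norm ((T ^^ n) x) \<le> norm x"
proof (induction n)
  case (Suc n)
  then show ?case using pos01_norm[of T "(T ^^ n) x"] by simp
qed simp

lemma ex_half: "\<exists>k. n = k + k \<or> n = Suc (k + k)" by presburger

lemma pos01_pow_pos: assumes "pos01 T" shows "0 \<le> Re (cinner ((T ^^ n) x) x)"
proof -
  have T: "bop T" "sa T" using assms by (auto simp: pos01_def)
  obtain k where "n = k + k \<or> n = Suc (k + k)" using ex_half[of n] by blast
  then show ?thesis
  proof
    assume n: "n = k + k"
    have "cinner ((T ^^ n) x) x = cinner ((T^^k) x) ((T^^k) x)"
      using saD[OF sa_pow[OF T(2)], of k "(T^^k) x" x] by (simp add: n funpow_add)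
    then show ?thesis by (simp add: Re_cinner_self)
  next
    assume n: "n = Suc (k + k)"
    have "(T ^^ n) x = (T^^k) (T ((T^^k) x))"
      by (simp add: n funpow_add pow_commute)
    then have "cinner ((T ^^ n) x) x = cinner (T ((T^^k) x)) ((T^^k) x)"
      using saD[OF sa_pow[OF T(2)], of k "T ((T^^k) x)" x] by simp
    then show ?thesis using assms by (simp add: pos01_def)
  qed
qed

lemma pos01_pow_le: assumes "pos01 T" shows "Re (cinner ((T ^^ n) x) x) \<le> (norm x)\<^sup>2"
proof -
  have "Re (cinner ((T ^^ n) x) x) \<le> cmod (cinner ((T ^^ n) x) x)" by (rule complex_Re_le_cmod)
  also have "\<dots> \<le> norm ((T ^^ n) x) * norm x" by (rule cinner_CS)
  also have "\<dots> \<le> norm x * norm x" using pos01_pow_norm[OF assms] by (simp add: mult_right_mono)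
  finally show ?thesis by (simp add: power2_eq_square)
qed

end

function cc :: "nat \<Rightarrow> real" where
  "cc n = (if n = 0 then 0 else ((if n = 1 then 1 else 0) + (\<Sum>k\<in>{1..<n}. cc k * cc (n - k))) / 2)"
  by auto
termination
  by (relation "Wellfounded.measure id") auto

declare cc.simps[simp del]

lemma cc0[simp]: "cc 0 = 0"
  by (simp add: cc.simps)

lemma cc_nonneg: "cc n \<ge> 0"
proof (induction n rule: less_induct)
  case (less n)
  show ?case
  proof (cases "n = 0")
    case True then show ?thesis by simp
  next
    case False
    have "(\<Sum>k\<in>{1..<n}. cc k * cc (n - k)) \<ge> 0"
      by (rule sum_nonneg) (use less in auto)
    then show ?thesis using False by (subst cc.simps) simp
  qed
qed

lemma cc_conv: "2 * cc n = (if n = 1 then 1 else 0) + (\<Sum>k\<le>n. cc k * cc (n - k))"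
proof (cases "n = 0")
  case True then show ?thesis by simp
next
  case False
  have "{..n} = insert 0 (insert n {1..<n})" using False by auto
  then have "(\<Sum>k\<le>n. cc k * cc (n - k)) = (\<Sum>k\<in>{1..<n}. cc k * cc (n - k))"
    using False by simp
  then show ?thesis using False by (subst cc.simps) simp
qed

definition CC :: "nat \<Rightarrow> real" where "CC N = (\<Sum>n<N. cc n)"

lemma CC_nonneg: "CC N \<ge> 0"
  unfolding CC_def by (rule sum_nonneg) (simp add: cc_nonneg)

lemma CC_mono: "M \<le> N \<Longrightarrow> CC M \<le> CC N"
  unfolding CC_def by (rule sum_mono2) (auto simp: cc_nonneg)

lemma two_CC: "2 * CC (Suc N) = (if N = 0 then 0 else 1) + (\<Sum>(i,j)\<in>{(i,j). i+j \<le> N}. cc i * cc j)"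
proof -
  have "2 * CC (Suc N) = (\<Sum>n\<le>N. 2 * cc n)" by (simp add: CC_def sum_distrib_left lessThan_Suc_atMost)
  also have "\<dots> = (\<Sum>n\<le>N. (if n = 1 then 1 else 0)) + (\<Sum>n\<le>N. \<Sum>k\<le>n. cc k * cc (n - k))"
    by (simp add: cc_conv sum.distrib)
  also have "(\<Sum>n\<le>N. (if n = 1 then 1 else 0::real)) = (if N = 0 then 0 else 1)"
  proof -
    have "(\<Sum>n\<le>N. (if n = 1 then 1 else 0::real)) = (\<Sum>n\<in>{..N} \<inter> {1}. 1)"
      by (simp add: sum.inter_restrict[symmetric] of_bool_def)
    also have "\<dots> = (if N = 0 then 0 else 1)" by (cases "N = 0") auto
    finally show ?thesis .
  qed
  also have "(\<Sum>n\<le>N. \<Sum>k\<le>n. cc k * cc (n - k)) = (\<Sum>(i,j)\<in>{(i,j). i+j \<le> N}. cc i * cc j)"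
    by (rule sum.triangle_reindex_eq[symmetric])
  finally show ?thesis .
qed

lemma fin_tri: "finite {(i,j). i+j \<le> (N::nat)}"
  by (rule finite_subset[of _ "{..N} \<times> {..N}"]) auto

lemma CC_le1: "CC N \<le> 1"
proof (induction N)
  case 0 then show ?case by (simp add: CC_def)
next
  case (Suc N)
  have "(\<Sum>(i,j)\<in>{(i,j). i+j \<le> N}. cc i * cc j) \<le> (\<Sum>(i,j)\<in>{..<N} \<times> {..<N}. cc i * cc j)"
  proof -
    have "(\<Sum>(i,j)\<in>{(i,j). i+j \<le> N}. cc i * cc j) = (\<Sum>(i,j)\<in>{(i,j). i+j \<le> N} \<inter> {..<N} \<times> {..<N}. cc i * cc j)"
    proof (rule sum.mono_neutral_right)
      show "finite {(i,j). i+j \<le> N}" by (rule fin_tri)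
      show "\<forall>x\<in>{(i,j). i+j \<le> N} - {(i,j). i+j \<le> N} \<inter> {..<N} \<times> {..<N}. (case x of (i,j) \<Rightarrow> cc i * cc j) = 0"
      proof
        fix x assume x: "x \<in> {(i,j). i+j \<le> N} - {(i,j). i+j \<le> N} \<inter> {..<N} \<times> {..<N}"
        obtain i j where ij: "x = (i,j)" by (cases x)
        have "i = 0 \<or> j = 0" using x ij by auto
        then show "(case x of (i,j) \<Rightarrow> cc i * cc j) = 0" using ij by auto
      qed
    qed auto
    also have "\<dots> \<le> (\<Sum>(i,j)\<in>{..<N} \<times> {..<N}. cc i * cc j)"
      by (rule sum_mono2) (auto simp: cc_nonneg)
    finally show ?thesis .
  qed
  also have "\<dots> = CC N * CC N" by (simp add: CC_def sum_product sum.cartesian_product)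
  also have "\<dots> \<le> 1" using Suc CC_nonneg[of N] by (simp add: mult_le_one)
  finally have "2 * CC (Suc N) \<le> 2" using two_CC[of N] by auto
  then show ?case by simp
qed

lemma CC_lower: "N \<noteq> 0 \<Longrightarrow> 1 + CC (Suc (N div 2)) * CC (Suc (N div 2)) \<le> 2 * CC (Suc N)"
proof -
  assume N: "N \<noteq> 0"
  let ?M = "Suc (N div 2)"
  have "CC ?M * CC ?M = (\<Sum>(i,j)\<in>{..<?M} \<times> {..<?M}. cc i * cc j)"
    by (simp only: CC_def sum_product sum.cartesian_product)
  also have "\<dots> \<le> (\<Sum>(i,j)\<in>{(i,j). i+j \<le> N}. cc i * cc j)"
    by (rule sum_mono2[OF fin_tri]) (auto simp: cc_nonneg)
  finally show ?thesis using two_CC[of N] N by simp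
qed

lemma cc_summable: "summable cc"
  by (rule summableI_nonneg_bounded[where x=1]) (auto simp: cc_nonneg CC_le1[unfolded CC_def])

lemma cc_sums: "cc sums 1"
proof -
  define L where "L = suminf cc"
  have lim: "CC \<longlonglongrightarrow> L" unfolding CC_def L_def fun_eq_iff by (rule summable_LIMSEQ[OF cc_summable])
  have l1: "(\<lambda>M. CC (Suc M)) \<longlonglongrightarrow> L" using lim by (rule LIMSEQ_Suc)
  have sm: "strict_mono (\<lambda>M::nat. Suc (2 * M))" by (rule strict_monoI) simp
  have l2: "(\<lambda>M. CC (Suc (2 * M))) \<longlonglongrightarrow> L"
    using LIMSEQ_subseq_LIMSEQ[OF lim sm] by (simp add: comp_def)
  have ev: "\<forall>\<^sub>F M in sequentially. 1 + CC (Suc M) * CC (Suc M) \<le> 2 * CC (Suc (2 * M))"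
  proof (rule eventually_sequentiallyI[of 1])
    fix M :: nat assume "1 \<le> M"
    then show "1 + CC (Suc M) * CC (Suc M) \<le> 2 * CC (Suc (2 * M))"
      using CC_lower[of "2 * M"] by simp
  qed
  have "1 + L * L \<le> 2 * L"
    by (rule tendsto_le[OF _ tendsto_mult_left[OF l2] tendsto_add[OF tendsto_const tendsto_mult[OF l1 l1]] ev]) simp
  then have "(L - 1)\<^sup>2 \<le> 0" by (simp add: power2_eq_square algebra_simps)
  then have "L = 1" by simp
  then show ?thesis using cc_summable by (simp add: sums_iff L_def)
qed

lemma bl_infsum: "bounded_linear h \<Longrightarrow> f summable_on A \<Longrightarrow> infsum (\<lambda>x. h (f x)) A = h (infsum f A)"
  by (rule infsumI[OF has_sum_bounded_linear[OF _ has_sum_infsum]])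

lemma cc_hs: "(cc has_sum 1) UNIV"
  by (rule sums_nonneg_imp_has_sum[OF cc_sums cc_nonneg])

lemma cc_infsum: "infsum cc UNIV = 1"
  by (rule infsumI[OF cc_hs])

lemma cc_summable_on: "cc summable_on A"
  using summable_on_subset_banach[of cc UNIV A] cc_hs by (auto simp: summable_on_def)

lemma cc_abs: "(\<And>n. norm (u n) \<le> B) \<Longrightarrow> (\<lambda>n. norm (cc n *\<^sub>R (u n :: 'a::real_normed_vector))) summable_on A"
proof -
  assume b: "\<And>n. norm (u n) \<le> B"
  have B: "B \<ge> 0" using b[of 0] norm_ge_zero order_trans by blast
  have "(\<lambda>n. norm (norm (cc n *\<^sub>R u n))) summable_on A"
  proof (rule Infinite_Sum.abs_summable_on_comparison_test[where g="\<lambda>n. B * cc n" and f="\<lambda>n. norm (cc n *\<^sub>R u n)" and A=A])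
    show "(\<lambda>n. norm (B * cc n)) summable_on A"
      using summable_on_cmult_right[OF cc_summable_on[of A], of B] B by (simp add: cc_nonneg abs_mult)
    show "norm (norm (cc n *\<^sub>R u n)) \<le> norm (B * cc n)" for n
      using b[of n] B cc_nonneg[of n] mult_left_mono[of "norm (u n)" B "cc n"] by (simp add: abs_mult mult.commute)
  qed
  then show ?thesis by simp
qed

lemma cc_sum_on: "(\<And>n. norm (u n) \<le> B) \<Longrightarrow> (\<lambda>n. cc n *\<^sub>R (u n :: 'a::banach)) summable_on A"
  by (rule abs_summable_summable[OF cc_abs])

lemma cc_norm_bound: assumes "\<And>n. norm (u n) \<le> B"
  shows "norm (infsum (\<lambda>n. cc n *\<^sub>R (u n :: 'a::banach)) A) \<le> infsum cc A * B"
proof -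
  have "norm (infsum (\<lambda>n. cc n *\<^sub>R u n) A) \<le> infsum (\<lambda>n. norm (cc n *\<^sub>R u n)) A"
    by (rule norm_infsum_bound[OF cc_abs[OF assms]])
  also have "\<dots> \<le> infsum (\<lambda>n. cc n * B) A"
  proof (rule infsum_mono)
    show "(\<lambda>n. norm (cc n *\<^sub>R u n)) summable_on A" by (rule cc_abs[OF assms])
    show "(\<lambda>n. cc n * B) summable_on A" by (rule summable_on_cmult_left[OF cc_summable_on])
    show "norm (cc n *\<^sub>R u n) \<le> cc n * B" for n
      using assms[of n] cc_nonneg[of n] by (simp add: mult_left_mono)
  qed
  also have "\<dots> = infsum cc A * B" by (rule infsum_cmult_left) (simp add: cc_summable_on)
  finally show ?thesis .
qed

context complex_hilbert_space
begin

definition Vop :: "('h \<Rightarrow> 'h) \<Rightarrow> 'h \<Rightarrow> 'h" where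
  "Vop Y x = infsum (\<lambda>n. cc n *\<^sub>R (Y ^^ n) x) UNIV"

lemma pos01_bop: "pos01 Y \<Longrightarrow> bop Y" by (simp add: pos01_def)
lemma pos01_sa: "pos01 Y \<Longrightarrow> sa Y" by (simp add: pos01_def)

lemma V_summable: "pos01 Y \<Longrightarrow> (\<lambda>n. cc n *\<^sub>R (Y ^^ n) x) summable_on A"
  by (rule cc_sum_on[where B="norm x"]) (rule pos01_pow_norm)

lemma V_norm: "pos01 Y \<Longrightarrow> norm (Vop Y x) \<le> norm x"
  unfolding Vop_def using cc_norm_bound[of "\<lambda>n. (Y ^^ n) x" "norm x" UNIV] pos01_pow_norm[of Y]
  by (simp add: cc_infsum)

lemma V_commute:
  assumes Y: "pos01 Y" and Z: "bop Z" and c: "\<And>x. Z (Y x) = Y (Z x)"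
  shows "Z (Vop Y x) = Vop Y (Z x)"
proof -
  have cn: "Z ((Y ^^ n) x) = (Y ^^ n) (Z x)" for n x
    by (induction n) (simp_all add: c)
  have "Z (Vop Y x) = infsum (\<lambda>n. Z (cc n *\<^sub>R (Y ^^ n) x)) UNIV"
    unfolding Vop_def by (rule bl_infsum[OF bop_linear[OF Z] V_summable[OF Y], symmetric])
  also have "\<dots> = Vop Y (Z x)" unfolding Vop_def by (simp add: bop_scaleR[OF Z] cn)
  finally show ?thesis .
qed

lemma V_add: assumes Y: "pos01 Y" shows "Vop Y (x + y) = Vop Y x + Vop Y y"
proof -
  have "Vop Y (x + y) = infsum (\<lambda>n. cc n *\<^sub>R (Y ^^ n) x + cc n *\<^sub>R (Y ^^ n) y) UNIV"
    unfolding Vop_def by (simp add: bop_add[OF bop_pow[OF pos01_bop[OF Y]]] scaleR_add_right)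
  also have "\<dots> = Vop Y x + Vop Y y"
    unfolding Vop_def by (rule infsum_add; rule V_summable[OF Y])
  finally show ?thesis .
qed

lemma V_scaleC: assumes Y: "pos01 Y" shows "Vop Y (scaleC a x) = scaleC a (Vop Y x)"
proof -
  have "scaleC a (Vop Y x) = infsum (\<lambda>n. scaleC a (cc n *\<^sub>R (Y ^^ n) x)) UNIV"
    unfolding Vop_def by (rule bl_infsum[OF bounded_linear_scaleC V_summable[OF Y], symmetric])
  also have "\<dots> = Vop Y (scaleC a x)"
    unfolding Vop_def
    by (simp add: bop_scaleC[OF bop_pow[OF pos01_bop[OF Y]]] scaleR_scaleC scaleC_scaleC mult.commute)
  finally show ?thesis by simp
qed

lemma V_bop: assumes Y: "pos01 Y" shows "bop (Vop Y)"
  unfolding bounded_op_def using V_add[OF Y] V_scaleC[OF Y] V_norm[OF Y]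
  by (auto intro!: exI[of _ 1])

lemma V_inner: assumes Y: "pos01 Y"
  shows "cinner (Vop Y x) y = infsum (\<lambda>n. complex_of_real (cc n) * cinner ((Y ^^ n) x) y) UNIV"
proof -
  have "cinner (Vop Y x) y = infsum (\<lambda>n. cinner (cc n *\<^sub>R (Y ^^ n) x) y) UNIV"
    unfolding Vop_def by (rule bl_infsum[OF bounded_linear_cinner_left V_summable[OF Y], symmetric])
  then show ?thesis by (simp add: cinner_scaleR_left)
qed

lemma V_sa: assumes Y: "pos01 Y" shows "sa (Vop Y)"
proof -
  have "cinner (Vop Y x) y = cinner x (Vop Y y)" for x y
  proof -
    have "cinner x (Vop Y y) = infsum (\<lambda>n. cinner x (cc n *\<^sub>R (Y ^^ n) y)) UNIV"
      unfolding Vop_def by (rule bl_infsum[OF bounded_linear_cinner_right V_summable[OF Y], symmetric])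
    also have "\<dots> = infsum (\<lambda>n. complex_of_real (cc n) * cinner ((Y ^^ n) x) y) UNIV"
      using saD[OF sa_pow[OF pos01_sa[OF Y]]] by (simp add: cinner_scaleR_right)
    finally show ?thesis using V_inner[OF Y] by simp
  qed
  then show ?thesis by (simp add: sa_def)
qed

lemma V_Re: assumes Y: "pos01 Y"
  shows "Re (cinner (Vop Y x) x) = infsum (\<lambda>n. cc n * Re (cinner ((Y ^^ n) x) x)) UNIV"
proof -
  have s: "(\<lambda>n. complex_of_real (cc n) * cinner ((Y ^^ n) x) x) summable_on UNIV"
  proof -
    have "(\<lambda>n. cinner (cc n *\<^sub>R (Y ^^ n) x) x) summable_on UNIV"
      by (rule summable_on_bounded_linear[OF bounded_linear_cinner_left V_summable[OF Y]])
    then show ?thesis by (simp add: cinner_scaleR_left)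
  qed
  have "Re (cinner (Vop Y x) x) = infsum (\<lambda>n. Re (complex_of_real (cc n) * cinner ((Y ^^ n) x) x)) UNIV"
    using V_inner[OF Y] bl_infsum[OF bounded_linear_Re s] by simp
  then show ?thesis by simp
qed

lemma V_pos01: assumes Y: "pos01 Y" shows "pos01 (Vop Y)"
proof -
  have b: "\<bar>cc n * Re (cinner ((Y ^^ n) x) x)\<bar> \<le> cc n * (norm x)\<^sup>2" for n x
    using pos01_pow_pos[OF Y, of n x] pos01_pow_le[OF Y, of n x] cc_nonneg[of n]
    by (simp add: abs_mult mult_left_mono)
  have sm: "(\<lambda>n. cc n * Re (cinner ((Y ^^ n) x) x)) summable_on UNIV" for x
  proof -
    have "(\<lambda>n. cc n *\<^sub>R Re (cinner ((Y ^^ n) x) x)) summable_on UNIV"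
    proof (rule cc_sum_on[where B="(norm x)\<^sup>2"])
      show "norm (Re (cinner ((Y ^^ n) x) x)) \<le> (norm x)\<^sup>2" for n
        using pos01_pow_pos[OF Y, of n x] pos01_pow_le[OF Y, of n x] by simp
    qed
    then show ?thesis by simp
  qed
  have "0 \<le> Re (cinner (Vop Y x) x)" for x
    unfolding V_Re[OF Y] by (rule infsum_nonneg) (simp add: pos01_pow_pos[OF Y] cc_nonneg)
  moreover have "Re (cinner (Vop Y x) x) \<le> (norm x)\<^sup>2" for x
  proof -
    have "Re (cinner (Vop Y x) x) \<le> infsum (\<lambda>n. cc n * (norm x)\<^sup>2) UNIV"
      unfolding V_Re[OF Y]
      by (rule infsum_mono[OF sm summable_on_cmult_left[OF cc_summable_on]])
         (simp add: pos01_pow_le[OF Y] cc_nonneg mult_left_mono)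
    also have "\<dots> = (norm x)\<^sup>2" by (simp add: infsum_cmult_left cc_summable_on cc_infsum)
    finally show ?thesis .
  qed
  ultimately show ?thesis using V_bop[OF Y] V_sa[OF Y] by (simp add: pos01_def)
qed

end

lemma cc_fin_le: "finite F \<Longrightarrow> sum cc F \<le> 1"
proof -
  assume F: "finite F"
  obtain N where "F \<subseteq> {..<N}" using F finite_nat_bounded by blast
  then have "sum cc F \<le> CC N" unfolding CC_def by (intro sum_mono2[OF finite_lessThan]) (auto simp: cc_nonneg)
  then show ?thesis using CC_le1[of N] by simp
qed

lemma cc_prod_summable: "(\<lambda>(k,l). B * (cc k * cc l)) summable_on (UNIV \<times> UNIV)" if B: "B \<ge> 0"
proof (rule nonneg_bdd_above_summable_on)
  show "0 \<le> (case x of (k,l) \<Rightarrow> B * (cc k * cc l))" for x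
    using B by (cases x) (auto simp: cc_nonneg)
  show "bdd_above (sum (\<lambda>(k,l). B * (cc k * cc l)) ` {F. F \<subseteq> UNIV \<times> UNIV \<and> finite F})"
  proof (rule bdd_aboveI2)
    fix F :: "(nat \<times> nat) set" assume "F \<in> {F. F \<subseteq> UNIV \<times> UNIV \<and> finite F}"
    then have F: "finite F" by simp
    have "sum (\<lambda>(k,l). B * (cc k * cc l)) F \<le> sum (\<lambda>(k,l). B * (cc k * cc l)) (fst ` F \<times> snd ` F)"
    proof (rule sum_mono2)
      show "finite (fst ` F \<times> snd ` F)" using F by simp
      show "F \<subseteq> fst ` F \<times> snd ` F" by force
      show "0 \<le> (case b of (k,l) \<Rightarrow> B * (cc k * cc l))" if "b \<in> fst ` F \<times> snd ` F - F" for b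
        using B by (cases b) (auto simp: cc_nonneg)
    qed
    also have "\<dots> = B * (sum cc (fst ` F) * sum cc (snd ` F))"
      unfolding sum_product by (simp only: sum.cartesian_product[symmetric] sum_distrib_left)
    also have "\<dots> \<le> B * (1 * 1)"
      using cc_fin_le[of "fst ` F"] cc_fin_le[of "snd ` F"] F B
      by (intro mult_left_mono mult_mono) (auto intro!: sum_nonneg cc_nonneg)
    finally show "sum (\<lambda>(k,l). B * (cc k * cc l)) F \<le> B" by simp
  qed
qed

lemma cauchy_vec:
  fixes u :: "nat \<Rightarrow> 'a::banach"
  assumes b: "\<And>j. norm (u j) \<le> B"
  shows "infsum (\<lambda>k. cc k *\<^sub>R infsum (\<lambda>l. cc l *\<^sub>R u (k+l)) UNIV) UNIV
       = infsum (\<lambda>n. (\<Sum>k\<le>n. cc k * cc (n - k)) *\<^sub>R u n) UNIV"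
proof -
  have B: "B \<ge> 0" using b[of 0] norm_ge_zero order_trans by blast
  define f where "f = (\<lambda>(k,l). (cc k * cc l) *\<^sub>R u (k+l))"
  have fn: "(\<lambda>p. norm (f p)) summable_on (UNIV \<times> UNIV)"
  proof -
    have "(\<lambda>p. norm (norm (f p))) summable_on (UNIV \<times> UNIV)"
    proof (rule Infinite_Sum.abs_summable_on_comparison_test[where g="\<lambda>(k,l). B * (cc k * cc l)"])
      show "(\<lambda>x. norm (case x of (k,l) \<Rightarrow> B * (cc k * cc l))) summable_on UNIV \<times> UNIV"
        using cc_prod_summable[OF B] B
        by (simp add: case_prod_unfold abs_mult cc_nonneg)
      show "norm (norm (f x)) \<le> norm (case x of (k,l) \<Rightarrow> B * (cc k * cc l))" for x
      proof -
        have "cc (fst x) * cc (snd x) * norm (u (fst x + snd x)) \<le> cc (fst x) * cc (snd x) * B"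
          using b[of "fst x + snd x"] cc_nonneg[of "fst x"] cc_nonneg[of "snd x"]
          by (intro mult_left_mono) auto
        then show ?thesis using B cc_nonneg[of "fst x"] cc_nonneg[of "snd x"]
          by (simp add: f_def case_prod_beta abs_mult mult.commute)
      qed
    qed
    then show ?thesis by simp
  qed
  have fs: "f summable_on (UNIV \<times> UNIV)" by (rule abs_summable_summable[OF fn])
  have A: "infsum f (UNIV \<times> UNIV) = infsum (\<lambda>k. cc k *\<^sub>R infsum (\<lambda>l. cc l *\<^sub>R u (k+l)) UNIV) UNIV"
  proof -
    have "infsum f (UNIV \<times> UNIV) = infsum (\<lambda>k. infsum (\<lambda>l. f (k,l)) UNIV) UNIV"
      using infsum_Sigma_banach[of f UNIV "\<lambda>_. UNIV"] fs by simp
    also have "\<dots> = infsum (\<lambda>k. cc k *\<^sub>R infsum (\<lambda>l. cc l *\<^sub>R u (k+l)) UNIV) UNIV"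
      by (simp add: f_def infsum_scaleR_right[symmetric])
    finally show ?thesis .
  qed
  define g where "g = (\<lambda>(n::nat,k::nat). (k, n - k))"
  have bij: "bij_betw g (Sigma UNIV atMost) (UNIV \<times> UNIV)"
    by (rule bij_betw_byWitness[where f'="\<lambda>(k,l). (k+l, k)"]) (auto simp: g_def)
  have C: "infsum f (UNIV \<times> UNIV) = infsum (\<lambda>n. (\<Sum>k\<le>n. cc k * cc (n - k)) *\<^sub>R u n) UNIV"
  proof -
    have "infsum f (UNIV \<times> UNIV) = infsum (\<lambda>p. f (g p)) (Sigma UNIV atMost)"
      by (rule infsum_reindex_bij_betw[OF bij, symmetric])
    also have "\<dots> = infsum (\<lambda>n. infsum (\<lambda>k. f (g (n,k))) {..n}) UNIV"
    proof -
      have "(\<lambda>p. f (g p)) summable_on (Sigma UNIV atMost)"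
        using summable_on_reindex_bij_betw[OF bij] fs by blast
      then show ?thesis using infsum_Sigma_banach[of "\<lambda>p. f (g p)" UNIV atMost] by simp
    qed
    also have "\<dots> = infsum (\<lambda>n. (\<Sum>k\<le>n. cc k * cc (n - k)) *\<^sub>R u n) UNIV"
    proof (rule infsum_cong)
      fix n
      have "infsum (\<lambda>k. f (g (n,k))) {..n} = (\<Sum>k\<le>n. f (g (n,k)))" by simp
      also have "\<dots> = (\<Sum>k\<le>n. (cc k * cc (n - k)) *\<^sub>R u n)"
        by (rule sum.cong) (auto simp: f_def g_def)
      also have "\<dots> = (\<Sum>k\<le>n. cc k * cc (n - k)) *\<^sub>R u n" by (simp add: scaleR_sum_left)
      finally show "infsum (\<lambda>k. f (g (n,k))) {..n} = (\<Sum>k\<le>n. cc k * cc (n - k)) *\<^sub>R u n" .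
    qed
    finally show ?thesis .
  qed
  show ?thesis using A C by simp
qed

lemma cauchy_vec2:
  fixes u :: "nat \<Rightarrow> 'a::banach"
  assumes b: "\<And>j. norm (u j) \<le> B"
  shows "infsum (\<lambda>k. cc k *\<^sub>R infsum (\<lambda>l. cc l *\<^sub>R u (k+l)) UNIV) UNIV
       = 2 *\<^sub>R infsum (\<lambda>n. cc n *\<^sub>R u n) UNIV - u 1"
proof -
  have hs1: "((\<lambda>n. 2 *\<^sub>R (cc n *\<^sub>R u n)) has_sum 2 *\<^sub>R infsum (\<lambda>n. cc n *\<^sub>R u n) UNIV) UNIV"
    by (rule has_sum_scaleR[OF has_sum_infsum[OF cc_sum_on[OF b]]])
  have hs2: "((\<lambda>n::nat. if n = 1 then u 1 else 0) has_sum u 1) UNIV"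
  proof -
    have "((\<lambda>n::nat. if n = 1 then u 1 else 0) has_sum u 1) {1}"
      by (subst has_sum_finite_iff) simp_all
    moreover have "((\<lambda>n::nat. if n = 1 then u 1 else 0) has_sum 0) (UNIV - {1})"
      by (rule has_sum_0) auto
    ultimately have H: "((\<lambda>n::nat. if n = 1 then u 1 else 0) has_sum (u 1 + 0)) ({1} \<union> (UNIV - {1}))"
      by (intro has_sum_Un_disjoint) auto
    have E: "{1::nat} \<union> (UNIV - {1}) = UNIV" by auto
    show ?thesis using H[unfolded E add_0_right] .
  qed
  have "((\<lambda>n. 2 *\<^sub>R (cc n *\<^sub>R u n) + - (if n = 1 then u 1 else 0)) has_sum
          (2 *\<^sub>R infsum (\<lambda>n. cc n *\<^sub>R u n) UNIV + - u 1)) UNIV"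
  proof (rule has_sum_add[OF hs1])
    show "((\<lambda>n::nat. - (if n = 1 then u 1 else 0)) has_sum - u 1) UNIV"
      using has_sum_uminus[where f="\<lambda>n::nat. if n = 1 then u 1 else 0" and a="- u 1" and A=UNIV] hs2
      unfolding minus_minus by blast
  qed
  moreover have "(\<lambda>n. 2 *\<^sub>R (cc n *\<^sub>R u n) + - (if n = 1 then u 1 else 0)) =
                 (\<lambda>n. (\<Sum>k\<le>n. cc k * cc (n - k)) *\<^sub>R u n)"
  proof
    fix n
    have "(\<Sum>k\<le>n. cc k * cc (n - k)) = 2 * cc n - (if n = 1 then 1 else 0)"
      using cc_conv[of n] by simp
    then show "2 *\<^sub>R (cc n *\<^sub>R u n) + - (if n = 1 then u 1 else 0) = (\<Sum>k\<le>n. cc k * cc (n - k)) *\<^sub>R u n"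
      by (cases "n = 1") (simp_all add: scaleR_diff_left)
  qed
  ultimately have "infsum (\<lambda>n. (\<Sum>k\<le>n. cc k * cc (n - k)) *\<^sub>R u n) UNIV
       = 2 *\<^sub>R infsum (\<lambda>n. cc n *\<^sub>R u n) UNIV + - u 1"
    by (intro infsumI) simp
  then show ?thesis using cauchy_vec[of u B, OF b] by simp
qed

lemma cc_tail: "infsum cc {N..} = 1 - CC N"
proof -
  have "infsum cc ({..<N} \<union> {N..}) = infsum cc {..<N} + infsum cc {N..}"
    by (rule infsum_Un_disjoint) (auto simp: cc_summable_on)
  moreover have "{..<N} \<union> {N..} = (UNIV :: nat set)" by auto
  ultimately show ?thesis by (simp add: cc_infsum CC_def)
qed

context complex_hilbert_space
begin

lemma VV: assumes Y: "pos01 Y" shows "Vop Y (Vop Y x) = 2 *\<^sub>R Vop Y x - Y x"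
proof -
  have inner: "(Y ^^ k) (Vop Y x) = infsum (\<lambda>l. cc l *\<^sub>R (Y ^^ (k + l)) x) UNIV" for k
  proof -
    have "(Y ^^ k) (Vop Y x) = infsum (\<lambda>l. (Y ^^ k) (cc l *\<^sub>R (Y ^^ l) x)) UNIV"
      unfolding Vop_def
      by (rule bl_infsum[OF bop_linear[OF bop_pow[OF pos01_bop[OF Y]]] V_summable[OF Y], symmetric])
    also have "\<dots> = infsum (\<lambda>l. cc l *\<^sub>R (Y ^^ (k + l)) x) UNIV"
      by (simp add: bop_scaleR[OF bop_pow[OF pos01_bop[OF Y]]] funpow_add)
    finally show ?thesis .
  qed
  have "Vop Y (Vop Y x) = infsum (\<lambda>k. cc k *\<^sub>R infsum (\<lambda>l. cc l *\<^sub>R (Y ^^ (k + l)) x) UNIV) UNIV"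
    unfolding Vop_def[of Y "Vop Y x"] by (simp add: inner)
  also have "\<dots> = 2 *\<^sub>R infsum (\<lambda>n. cc n *\<^sub>R (Y ^^ n) x) UNIV - (Y ^^ 1) x"
    by (rule cauchy_vec2[of "\<lambda>j. (Y ^^ j) x" "norm x"]) (rule pos01_pow_norm[OF Y])
  finally show ?thesis by (simp add: Vop_def)
qed

definition Sq :: "('h \<Rightarrow> 'h) \<Rightarrow> 'h \<Rightarrow> 'h" where
  "Sq Y = (\<lambda>x. x - Vop Y x)"

lemma Sq_sq: assumes Y: "pos01 Y" shows "Sq Y (Sq Y x) = x - Y x"
proof -
  have "Sq Y (Sq Y x) = x - Vop Y x - (Vop Y x - Vop Y (Vop Y x))"
    by (simp add: Sq_def bop_diff[OF V_bop[OF Y]])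
  also have "\<dots> = x - Y x" by (simp add: VV[OF Y] algebra_simps scaleR_2)
  finally show ?thesis .
qed

lemma Sq_pos01: "pos01 Y \<Longrightarrow> pos01 (Sq Y)"
  unfolding Sq_def by (rule pos01_compl[OF V_pos01])

lemma Sq_commute: assumes Y: "pos01 Y" and Z: "bop Z" and c: "\<And>x. Z (Y x) = Y (Z x)"
  shows "Z (Sq Y x) = Sq Y (Z x)"
  by (simp add: Sq_def bop_diff[OF Z] V_commute[OF Y Z c])

lemma V_tail: assumes Y: "pos01 Y"
  shows "norm (Vop Y x - (\<Sum>n<N. cc n *\<^sub>R (Y ^^ n) x)) \<le> (1 - CC N) * norm x"
proof -
  let ?f = "\<lambda>n. cc n *\<^sub>R (Y ^^ n) x"
  have "infsum ?f ({..<N} \<union> {N..}) = infsum ?f {..<N} + infsum ?f {N..}"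
    by (rule infsum_Un_disjoint) (auto simp: V_summable[OF Y])
  moreover have "{..<N} \<union> {N..} = (UNIV :: nat set)" by auto
  ultimately have "Vop Y x - (\<Sum>n<N. ?f n) = infsum ?f {N..}" by (simp add: Vop_def)
  also have "norm \<dots> \<le> infsum cc {N..} * norm x"
    by (rule cc_norm_bound) (rule pos01_pow_norm[OF Y])
  finally show ?thesis by (simp add: cc_tail)
qed

end

context complex_hilbert_space
begin

abbreviation vna where "vna R \<equiv> von_neumann_algebra scaleC cinner R"

lemma vna_bop: "vna R \<Longrightarrow> T \<in> R \<Longrightarrow> bop T"
  by (simp add: von_neumann_algebra_def)

lemma vna_id: "vna R \<Longrightarrow> (\<lambda>x. x) \<in> R"
  by (simp add: von_neumann_algebra_def id_def[symmetric])

lemma vna_plus: "vna R \<Longrightarrow> S \<in> R \<Longrightarrow> T \<in> R \<Longrightarrow> (\<lambda>x. S x + T x) \<in> R"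
  by (simp add: von_neumann_algebra_def)

lemma vna_sC: "vna R \<Longrightarrow> T \<in> R \<Longrightarrow> (\<lambda>x. scaleC a (T x)) \<in> R"
  by (simp add: von_neumann_algebra_def)

lemma vna_comp: "vna R \<Longrightarrow> S \<in> R \<Longrightarrow> T \<in> R \<Longrightarrow> (\<lambda>x. S (T x)) \<in> R"
  using von_neumann_algebra_def[of scaleC cinner R] by (auto simp: comp_def)

lemma vna_adj: "vna R \<Longrightarrow> T \<in> R \<Longrightarrow> \<exists>S\<in>R. \<forall>x y. cinner (T x) y = cinner x (S y)"
  by (simp add: von_neumann_algebra_def)

lemma vna_wot: "vna R \<Longrightarrow> wot_closed scaleC cinner R"
  by (simp add: von_neumann_algebra_def)

lemma vna_sR: "vna R \<Longrightarrow> T \<in> R \<Longrightarrow> (\<lambda>x. r *\<^sub>R T x) \<in> R"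
  using vna_sC[of R T "complex_of_real r"] by (simp add: scaleR_scaleC)

lemma vna_diff: "vna R \<Longrightarrow> S \<in> R \<Longrightarrow> T \<in> R \<Longrightarrow> (\<lambda>x. S x - T x) \<in> R"
  using vna_plus[of R S "\<lambda>x. (-1) *\<^sub>R T x"] vna_sR[of R T "-1"] by simp

lemma vna_pow: "vna R \<Longrightarrow> T \<in> R \<Longrightarrow> T ^^ n \<in> R"
proof (induction n)
  case 0 then show ?case using vna_id[of R] by (simp add: id_def)
next
  case (Suc n) then show ?case using vna_comp[of R T "T ^^ n"] by (simp add: comp_def)
qed

lemma ideal_R: "vna R \<Longrightarrow> left_ideal scaleC R R"
  unfolding left_ideal_def
proof (intro conjI ballI allI)
  assume R: "vna R"
  show "(\<lambda>x. 0) \<in> R" using vna_sC[OF R vna_id[OF R], of 0] by simp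
qed (auto simp: von_neumann_algebra_def)

lemma li_sub: "left_ideal scaleC R I \<Longrightarrow> T \<in> I \<Longrightarrow> T \<in> R"
  by (auto simp: left_ideal_def)

lemma li_zero: "left_ideal scaleC R I \<Longrightarrow> (\<lambda>x. 0) \<in> I"
  by (simp add: left_ideal_def)

lemma li_plus: "left_ideal scaleC R I \<Longrightarrow> S \<in> I \<Longrightarrow> T \<in> I \<Longrightarrow> (\<lambda>x. S x + T x) \<in> I"
  by (simp add: left_ideal_def)

lemma li_sC: "left_ideal scaleC R I \<Longrightarrow> T \<in> I \<Longrightarrow> (\<lambda>x. scaleC a (T x)) \<in> I"
  by (simp add: left_ideal_def)

lemma li_sR: "left_ideal scaleC R I \<Longrightarrow> T \<in> I \<Longrightarrow> (\<lambda>x. r *\<^sub>R T x) \<in> I"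
  using li_sC[of R I T "complex_of_real r"] by (simp add: scaleR_scaleC)

lemma li_comp: "left_ideal scaleC R I \<Longrightarrow> A \<in> R \<Longrightarrow> T \<in> I \<Longrightarrow> (\<lambda>x. A (T x)) \<in> I"
  using left_ideal_def[of scaleC R I] by (auto simp: comp_def)

lemma li_sum: "left_ideal scaleC R I \<Longrightarrow> (\<And>i. i \<in> A \<Longrightarrow> T i \<in> I) \<Longrightarrow> (\<lambda>x. \<Sum>i\<in>A. T i x) \<in> I"
proof (induction A rule: infinite_finite_induct)
  case (infinite A) then show ?case using li_zero by simp
next
  case empty then show ?case using li_zero by simp
next
  case (insert a A)
  then show ?case using li_plus[of R I "T a" "\<lambda>x. \<Sum>i\<in>A. T i x"] by simp
qed

lemma vna_norm_closed: assumes R: "vna R" shows "norm_closed scaleC R"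
  unfolding norm_closed_def
proof (intro allI impI, elim conjE)
  fix T assume T: "bop T" and ap: "\<forall>\<epsilon>>0. \<exists>A\<in>R. \<forall>x. norm (T x - A x) \<le> \<epsilon> * norm x"
  have "\<forall>\<epsilon>>0. \<forall>P. finite P \<longrightarrow> (\<exists>A\<in>R. \<forall>(x, y)\<in>P. cmod (cinner (T x - A x) y) < \<epsilon>)"
  proof (intro allI impI)
    fix \<epsilon> :: real and P :: "('h \<times> 'h) set" assume e: "\<epsilon> > 0" and P: "finite P"
    define M where "M = 1 + (\<Sum>(x,y)\<in>P. norm x * norm y)"
    have M: "M \<ge> 1" unfolding M_def by (simp add: sum_nonneg case_prod_beta)
    obtain A where A: "A \<in> R" "\<And>x. norm (T x - A x) \<le> (\<epsilon> / (2 * M)) * norm x"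
      using ap e M by (metis divide_pos_pos mult_pos_pos zero_less_numeral order_less_le_trans zero_less_one)
    show "\<exists>A\<in>R. \<forall>(x, y)\<in>P. cmod (cinner (T x - A x) y) < \<epsilon>"
    proof (intro bexI[OF _ A(1)] ballI, clarify)
      fix x y assume xy: "(x, y) \<in> P"
      have le: "norm x * norm y \<le> M"
      proof -
        have "norm x * norm y \<le> (\<Sum>(x,y)\<in>P. norm x * norm y)"
          using member_le_sum[OF xy, of "\<lambda>(x,y). norm x * norm y"] P by (simp add: case_prod_beta)
        then show ?thesis by (simp add: M_def)
      qed
      have "cmod (cinner (T x - A x) y) \<le> norm (T x - A x) * norm y" by (rule cinner_CS)
      also have "\<dots> \<le> ((\<epsilon> / (2 * M)) * norm x) * norm y" using A(2)[of x] by (rule mult_right_mono) simp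
      also have "\<dots> = (\<epsilon> / (2 * M)) * (norm x * norm y)" by simp
      also have "\<dots> \<le> (\<epsilon> / (2 * M)) * M" using le e M by (intro mult_left_mono) auto
      also have "\<dots> < \<epsilon>" using e M by simp
      finally show "cmod (cinner (T x - A x) y) < \<epsilon>" .
    qed
  qed
  then show "T \<in> R" using vna_wot[OF R] T unfolding wot_closed_def by blast
qed

lemma nc_approx: "norm_closed scaleC S \<Longrightarrow> bop T \<Longrightarrow>
    (\<And>\<epsilon>. \<epsilon> > 0 \<Longrightarrow> \<exists>A\<in>S. \<forall>x. norm (T x - A x) \<le> \<epsilon> * norm x) \<Longrightarrow> T \<in> S"
  unfolding norm_closed_def by blast

lemma Sq_in:
  assumes R: "vna R" and I: "left_ideal scaleC R I" and nc: "norm_closed scaleC I"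
    and Y: "pos01 Y" "Y \<in> R" and c: "(\<lambda>x. x - Y x) \<in> I"
  shows "Sq Y \<in> I"
proof -
  have pw: "(\<lambda>x. x - (Y ^^ n) x) \<in> I" for n
  proof (induction n)
    case 0 then show ?case using li_zero[OF I] by simp
  next
    case (Suc n)
    have "(\<lambda>x. (x - (Y ^^ n) x) + (Y ^^ n) (x - Y x)) \<in> I"
      by (rule li_plus[OF I Suc li_comp[OF I vna_pow[OF R Y(2)] c]])
    moreover have "(\<lambda>x. (x - (Y ^^ n) x) + (Y ^^ n) (x - Y x)) = (\<lambda>x. x - (Y ^^ Suc n) x)"
      by (simp add: bop_diff[OF bop_pow[OF pos01_bop[OF Y(1)]]] pow_commute)
    ultimately show ?case by simp
  qed
  have AN: "(\<lambda>x. \<Sum>n<N. cc n *\<^sub>R (x - (Y ^^ n) x)) \<in> I" for N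
    by (rule li_sum[OF I]) (rule li_sR[OF I pw])
  show ?thesis
  proof (rule nc_approx[OF nc])
    show "bop (Sq Y)" using Sq_pos01[OF Y(1)] by (simp add: pos01_def)
    fix \<epsilon> :: real assume e: "\<epsilon> > 0"
    have "(\<lambda>N. CC N) \<longlonglongrightarrow> 1" using cc_sums unfolding sums_def CC_def by simp
    then obtain N where N: "\<bar>CC N - 1\<bar> < \<epsilon> / 2"
      using e by (metis LIMSEQ_D real_norm_def half_gt_zero order_refl)
    show "\<exists>A\<in>I. \<forall>x. norm (Sq Y x - A x) \<le> \<epsilon> * norm x"
    proof (intro bexI[OF _ AN[of N]] allI)
      fix x
      have eq: "Sq Y x - (\<Sum>n<N. cc n *\<^sub>R (x - (Y ^^ n) x)) =
            (1 - CC N) *\<^sub>R x - (Vop Y x - (\<Sum>n<N. cc n *\<^sub>R (Y ^^ n) x))"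
        by (simp add: Sq_def CC_def scaleR_diff_right sum_subtractf scaleR_sum_left algebra_simps)
      have "norm (Sq Y x - (\<Sum>n<N. cc n *\<^sub>R (x - (Y ^^ n) x))) \<le>
            norm ((1 - CC N) *\<^sub>R x) + norm (Vop Y x - (\<Sum>n<N. cc n *\<^sub>R (Y ^^ n) x))"
        unfolding eq by (rule norm_triangle_ineq4)
      also have "\<dots> \<le> (1 - CC N) * norm x + (1 - CC N) * norm x"
        using V_tail[OF Y(1), of x N] CC_le1[of N] by (simp add: mult.commute)
      also have "\<dots> \<le> \<epsilon> * norm x"
        using N CC_le1[of N] by (simp add: mult_right_mono flip: distrib_right)
      finally show "norm (Sq Y x - (\<Sum>n<N. cc n *\<^sub>R (x - (Y ^^ n) x))) \<le> \<epsilon> * norm x" .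
    qed
  qed
qed

end

context complex_hilbert_space
begin

definition cmp :: "('h \<Rightarrow> 'h) \<Rightarrow> 'h \<Rightarrow> 'h" where "cmp H = (\<lambda>x. x - H x)"

lemma cmp_apply: "cmp H x = x - H x" by (simp add: cmp_def)

lemma cmp_commute: "bop H \<Longrightarrow> H (cmp H x) = cmp H (H x)"
  by (simp add: cmp_def bop_diff)

lemma cmp_pow_commute: "bop H \<Longrightarrow> H ((cmp H ^^ n) x) = (cmp H ^^ n) (H x)"
  by (induction n) (simp_all add: cmp_commute)

lemma contract1:
  assumes H: "pos01 H" and K: "K \<ge> 1"
    and G3: "\<And>z. (norm (H z))\<^sup>2 \<le> K\<^sup>2 * Re (cinner (H (H z)) (H z))"
    and G4: "\<And>w. (norm (H w))\<^sup>2 \<le> Re (cinner (H w) w)"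
  shows "(norm (cmp H (H z)))\<^sup>2 \<le> (1 - 1 / K\<^sup>2) * (norm (H z))\<^sup>2"
proof -
  let ?w = "H z"
  have "(norm (cmp H ?w))\<^sup>2 = (norm ?w)\<^sup>2 + (norm (H ?w))\<^sup>2 - 2 * Re (cinner ?w (H ?w))"
    by (simp add: cmp_apply norm_diff_sq)
  also have "Re (cinner ?w (H ?w)) = Re (cinner (H ?w) ?w)" by (rule cinner_commute_Re)
  also have "(norm ?w)\<^sup>2 + (norm (H ?w))\<^sup>2 - 2 * Re (cinner (H ?w) ?w) \<le> (norm ?w)\<^sup>2 - Re (cinner (H ?w) ?w)"
    using G4[of ?w] by simp
  also have "\<dots> \<le> (norm ?w)\<^sup>2 - (norm ?w)\<^sup>2 / K\<^sup>2"
  proof -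
    have "(norm ?w)\<^sup>2 / K\<^sup>2 \<le> Re (cinner (H ?w) ?w)"
      using G3[of z] K by (simp add: divide_le_eq mult.commute)
    then show ?thesis by simp
  qed
  also have "\<dots> = (1 - 1 / K\<^sup>2) * (norm ?w)\<^sup>2" by (simp add: algebra_simps)
  finally show ?thesis .
qed

lemma contract_pow:
  assumes H: "pos01 H" and r: "0 \<le> r"
    and c1: "\<And>z. (norm (cmp H (H z)))\<^sup>2 \<le> r * (norm (H z))\<^sup>2"
  shows "norm ((cmp H ^^ n) (H z)) \<le> sqrt r ^ n * norm (H z)"
proof (induction n)
  case 0 then show ?case by simp
next
  case (Suc n)
  have hb: "bop H" using H by (simp add: pos01_def)
  have "(cmp H ^^ Suc n) (H z) = cmp H (H ((cmp H ^^ n) z))"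
    by (simp add: cmp_pow_commute[OF hb])
  then have "(norm ((cmp H ^^ Suc n) (H z)))\<^sup>2 \<le> r * (norm (H ((cmp H ^^ n) z)))\<^sup>2"
    using c1 by simp
  then have "norm ((cmp H ^^ Suc n) (H z)) \<le> sqrt r * norm (H ((cmp H ^^ n) z))"
  proof -
    assume a: "(norm ((cmp H ^^ Suc n) (H z)))\<^sup>2 \<le> r * (norm (H ((cmp H ^^ n) z)))\<^sup>2"
    have "sqrt ((norm ((cmp H ^^ Suc n) (H z)))\<^sup>2) \<le> sqrt (r * (norm (H ((cmp H ^^ n) z)))\<^sup>2)"
      using a by (rule real_sqrt_le_mono)
    then show ?thesis by (simp add: real_sqrt_mult)
  qed
  also have "H ((cmp H ^^ n) z) = (cmp H ^^ n) (H z)" by (rule cmp_pow_commute[OF hb])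
  also have "sqrt r * norm ((cmp H ^^ n) (H z)) \<le> sqrt r * (sqrt r ^ n * norm (H z))"
    using Suc by (rule mult_left_mono) (simp add: r)
  finally show ?case by (simp add: mult.assoc)
qed

lemma cmp_diff_range:
  assumes hb: "bop H"
  shows "x - (cmp H ^^ k) x = H (\<Sum>j<k. (cmp H ^^ j) x)"
proof (induction k)
  case 0 then show ?case using hb by simp
next
  case (Suc k)
  have "x - (cmp H ^^ Suc k) x = (x - (cmp H ^^ k) x) + H ((cmp H ^^ k) x)"
    by (simp add: cmp_apply)
  also have "\<dots> = H (\<Sum>j<Suc k. (cmp H ^^ j) x)"
    using Suc by (simp add: bop_add[OF hb])
  finally show ?case .
qed

end

context complex_hilbert_space
begin

lemma pos01_cmp: "pos01 H \<Longrightarrow> pos01 (cmp H)"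
  unfolding cmp_def by (rule pos01_compl)

lemma cmp_cauchy_bound:
  assumes H: "pos01 H" and r: "0 \<le> r"
    and c1: "\<And>z. (norm (cmp H (H z)))\<^sup>2 \<le> r * (norm (H z))\<^sup>2"
  shows "norm ((cmp H ^^ n) x - (cmp H ^^ (n + k)) x) \<le> 2 * sqrt r ^ n * norm x"
proof -
  have hb: "bop H" using H by (simp add: pos01_def)
  have cb: "bop (cmp H ^^ n)" using pos01_cmp[OF H] by (simp add: pos01_def bop_pow)
  have "(cmp H ^^ n) x - (cmp H ^^ (n + k)) x = (cmp H ^^ n) (x - (cmp H ^^ k) x)"
    by (simp add: funpow_add bop_diff[OF cb])
  also have "\<dots> = (cmp H ^^ n) (H (\<Sum>j<k. (cmp H ^^ j) x))"
    by (simp add: cmp_diff_range[OF hb])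
  finally have "norm ((cmp H ^^ n) x - (cmp H ^^ (n + k)) x) \<le> sqrt r ^ n * norm (H (\<Sum>j<k. (cmp H ^^ j) x))"
    using contract_pow[OF H r c1] by simp
  also have "H (\<Sum>j<k. (cmp H ^^ j) x) = x - (cmp H ^^ k) x" by (simp add: cmp_diff_range[OF hb])
  also have "norm (x - (cmp H ^^ k) x) \<le> 2 * norm x"
    using norm_triangle_ineq4[of x "(cmp H ^^ k) x"] pos01_pow_norm[OF pos01_cmp[OF H], of k x] by simp
  then have "sqrt r ^ n * norm (x - (cmp H ^^ k) x) \<le> sqrt r ^ n * (2 * norm x)"
    by (rule mult_left_mono) (simp add: r)
  finally show ?thesis by (simp add: mult_ac)
qed

lemma proj_exists:
  assumes H: "pos01 H" and r: "0 \<le> r" "r < 1"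
    and c1: "\<And>z. (norm (cmp H (H z)))\<^sup>2 \<le> r * (norm (H z))\<^sup>2"
  shows "\<exists>p. H p = 0 \<and> (\<forall>n. norm ((cmp H ^^ n) x - p) \<le> 2 * sqrt r ^ n * norm x)"
proof -
  define q where "q = sqrt r"
  have q: "0 \<le> q" "q < 1" using r by (auto simp: q_def)
  have qlim: "(\<lambda>n. q ^ n) \<longlonglongrightarrow> 0" using q by (intro LIMSEQ_power_zero) simp
  define X where "X n = (cmp H ^^ n) x" for n
  have bnd: "norm (X n - X (n + k)) \<le> 2 * q ^ n * norm x" for n k
    unfolding X_def q_def by (rule cmp_cauchy_bound[OF H r(1) c1])
  have "Cauchy X"
  proof (rule CauchyI)
    fix e :: real assume e: "0 < e"
    have L: "(\<lambda>n. 2 * (norm x + 1) * q ^ n) \<longlonglongrightarrow> 2 * (norm x + 1) * 0"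
      by (intro tendsto_mult tendsto_const qlim)
    obtain M where M: "\<And>n. n \<ge> M \<Longrightarrow> \<bar>2 * (norm x + 1) * q ^ n\<bar> < e"
      using LIMSEQ_D[OF L e] by auto
    show "\<exists>M. \<forall>m\<ge>M. \<forall>n\<ge>M. norm (X m - X n) < e"
    proof (intro exI allI impI)
      fix m n assume mn: "M \<le> m" "M \<le> n"
      have gen: "norm (X a - X b) < e" if "M \<le> a" "a \<le> b" for a b
      proof -
        obtain k where b: "b = a + k" using \<open>a \<le> b\<close> le_Suc_ex by blast
        have "norm (X a - X b) \<le> 2 * q ^ a * norm x" unfolding b by (rule bnd)
        also have "\<dots> \<le> 2 * (norm x + 1) * q ^ a"
        proof -
          have "0 \<le> q ^ a" using q by simp
          then show ?thesis by (simp add: algebra_simps)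
        qed
        also have "\<dots> < e" using M[of a] that q by simp
        finally show ?thesis .
      qed
      show "norm (X m - X n) < e"
      proof (cases "m \<le> n")
        case True then show ?thesis using gen mn by blast
      next
        case False then show ?thesis using gen[of n m] mn by (simp add: norm_minus_commute)
      qed
    qed
  qed
  then obtain p where p: "X \<longlonglongrightarrow> p" using Cauchy_convergent_iff convergent_def by blast
  have pb: "norm (X n - p) \<le> 2 * q ^ n * norm x" for n
  proof -
    have "(\<lambda>k. X (k + n)) \<longlonglongrightarrow> p" using p by (rule LIMSEQ_ignore_initial_segment)
    then have L: "(\<lambda>k. norm (X n - X (n + k))) \<longlonglongrightarrow> norm (X n - p)"
      by (intro tendsto_norm tendsto_diff tendsto_const) (simp add: add.commute)
    have ev: "\<forall>\<^sub>F k in sequentially. norm (X n - X (n + k)) \<le> 2 * q ^ n * norm x"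
      by (simp add: bnd)
    show ?thesis by (rule tendsto_le[OF trivial_limit_sequentially tendsto_const L ev])
  qed
  have hb: "bop H" using H by (simp add: pos01_def)
  have "(\<lambda>n. H (X n)) \<longlonglongrightarrow> H p" by (rule bop_cont[OF hb p])
  moreover have "(\<lambda>n. H (X n)) \<longlonglongrightarrow> 0"
  proof (rule Lim_null_comparison)
    show "\<forall>\<^sub>F n in sequentially. norm (H (X n)) \<le> q ^ n * norm (H x)"
      using contract_pow[OF H r(1) c1, of _ x] cmp_pow_commute[OF hb]
      by (simp add: X_def q_def)
    show "(\<lambda>n. q ^ n * norm (H x)) \<longlonglongrightarrow> 0"
      using tendsto_mult[OF qlim tendsto_const[of "norm (H x)"]] by simp
  qed
  ultimately have "H p = 0" by (rule LIMSEQ_unique)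
  then show ?thesis using pb by (auto simp: X_def q_def)
qed

end

context complex_hilbert_space
begin

lemma vna_sum: "vna R \<Longrightarrow> (\<And>i. i \<in> A \<Longrightarrow> T i \<in> R) \<Longrightarrow> (\<lambda>x. \<Sum>i\<in>A. T i x) \<in> R"
  by (rule li_sum[OF ideal_R])

lemma gen_rep:
  assumes R: "vna R" and F: "finite F" "F \<subseteq> R" and T: "T \<in> left_ideal_generated scaleC R F"
  shows "\<exists>B. (\<forall>a\<in>F. B a \<in> R) \<and> T = (\<lambda>x. \<Sum>a\<in>F. B a (a x))"
proof -
  define L where "L = {T. \<exists>B. (\<forall>a\<in>F. B a \<in> R) \<and> T = (\<lambda>x. \<Sum>a\<in>F. B a (a x))}"
  have z: "(\<lambda>x. 0) \<in> R" by (rule li_zero[OF ideal_R[OF R]])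
  have "left_ideal scaleC R L"
    unfolding left_ideal_def
  proof (intro conjI ballI allI)
    show "L \<subseteq> R"
    proof
      fix T assume "T \<in> L"
      then obtain B where B: "\<forall>a\<in>F. B a \<in> R" "T = (\<lambda>x. \<Sum>a\<in>F. B a (a x))" by (auto simp: L_def)
      show "T \<in> R" unfolding B(2)
        by (rule vna_sum[OF R]) (use B(1) F(2) in \<open>auto intro: vna_comp[OF R]\<close>)
    qed
    show "(\<lambda>x. 0) \<in> L" unfolding L_def using z by (auto intro!: exI[of _ "\<lambda>a x. 0"])
  next
    fix S T assume "S \<in> L" "T \<in> L"
    then obtain B B' where B: "\<forall>a\<in>F. B a \<in> R" "S = (\<lambda>x. \<Sum>a\<in>F. B a (a x))"
      and B': "\<forall>a\<in>F. B' a \<in> R" "T = (\<lambda>x. \<Sum>a\<in>F. B' a (a x))" by (auto simp: L_def)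
    show "(\<lambda>x. S x + T x) \<in> L" unfolding L_def
      by (rule CollectI, rule exI[of _ "\<lambda>a x. B a x + B' a x"])
         (use B B' in \<open>auto intro: vna_plus[OF R] simp: sum.distrib\<close>)
  next
    fix c T assume "T \<in> L"
    then obtain B where B: "\<forall>a\<in>F. B a \<in> R" "T = (\<lambda>x. \<Sum>a\<in>F. B a (a x))" by (auto simp: L_def)
    have sc: "bop (\<lambda>x. scaleC c x)" using bop_sC[of "\<lambda>x. x" c] by simp
    show "(\<lambda>x. scaleC c (T x)) \<in> L" unfolding L_def
      by (rule CollectI, rule exI[of _ "\<lambda>a x. scaleC c (B a x)"])
         (use B in \<open>auto intro: vna_sC[OF R] simp: bop_sum[OF sc]\<close>)
  next
    fix A T assume A: "A \<in> R" and "T \<in> L"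
    then obtain B where B: "\<forall>a\<in>F. B a \<in> R" "T = (\<lambda>x. \<Sum>a\<in>F. B a (a x))" by (auto simp: L_def)
    show "A \<circ> T \<in> L" unfolding L_def
      by (rule CollectI, rule exI[of _ "\<lambda>a x. A (B a x)"])
         (use B A in \<open>auto intro: vna_comp[OF R] simp: bop_sum[OF vna_bop[OF R A]] comp_def\<close>)
  qed
  moreover have "F \<subseteq> L"
  proof
    fix f assume f: "f \<in> F"
    define B where "B = (\<lambda>a. if a = f then (\<lambda>x::'h. x) else (\<lambda>x. 0))"
    have "\<forall>a\<in>F. B a \<in> R" using vna_id[OF R] z by (auto simp: B_def)
    moreover have "f = (\<lambda>x. \<Sum>a\<in>F. B a (a x))"
    proof
      fix x
      have "(\<Sum>a\<in>F. B a (a x)) = (\<Sum>a\<in>F. if a = f then a x else 0)"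
        by (rule sum.cong) (auto simp: B_def)
      also have "\<dots> = f x" using f F(1) by (simp add: sum.delta')
      finally show "f x = (\<Sum>a\<in>F. B a (a x))" by simp
    qed
    ultimately show "f \<in> L" unfolding L_def by blast
  qed
  ultimately have "left_ideal_generated scaleC R F \<subseteq> L"
    unfolding left_ideal_generated_def by blast
  then show ?thesis using T by (auto simp: L_def)
qed

lemma gen_ker:
  assumes R: "vna R" and F: "F \<subseteq> R" and T: "T \<in> left_ideal_generated scaleC R F"
  shows "T \<in> R \<and> (\<forall>x. (\<forall>a\<in>F. a x = 0) \<longrightarrow> T x = 0)"
proof -
  define J where "J = {T \<in> R. \<forall>x. (\<forall>a\<in>F. a x = 0) \<longrightarrow> T x = 0}"
  have "left_ideal scaleC R J"
    unfolding left_ideal_def J_def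
    using li_zero[OF ideal_R[OF R]] vna_plus[OF R] vna_sC[OF R] vna_comp[OF R] vna_bop[OF R]
    by (auto simp: comp_def)
  moreover have "F \<subseteq> J" using F by (auto simp: J_def)
  ultimately have "left_ideal_generated scaleC R F \<subseteq> J"
    unfolding left_ideal_generated_def by blast
  then show ?thesis using T by (auto simp: J_def)
qed

end

context complex_hilbert_space
begin

lemma H_exists:
  assumes R: "vna R" and F: "finite F" "F \<subseteq> R" "F \<subseteq> I" and I: "left_ideal scaleC R I"
  shows "\<exists>H M. H \<in> I \<and> pos01 H \<and> M \<ge> 1 \<and> (\<forall>x. Re (cinner (H x) x) = (1 / M) * (\<Sum>a\<in>F. (norm (a x))\<^sup>2))"
proof -
  have "\<forall>a\<in>F. \<exists>S. S \<in> R \<and> (\<forall>x y. cinner (a x) y = cinner x (S y))"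
    using vna_adj[OF R] F(2) by blast
  then obtain adj where adj0: "\<forall>a\<in>F. adj a \<in> R \<and> (\<forall>x y. cinner (a x) y = cinner x (adj a y))"
    by (rule bchoice[THEN exE]) blast
  then have adj: "\<And>a. a \<in> F \<Longrightarrow> adj a \<in> R" "\<And>a x y. a \<in> F \<Longrightarrow> cinner (a x) y = cinner x (adj a y)"
    by auto
  have "\<forall>a\<in>F. \<exists>K. \<forall>x. norm (a x) \<le> K * norm x"
  proof
    fix a assume "a \<in> F"
    then have "bop a" using F(2) vna_bop[OF R] by blast
    then show "\<exists>K. \<forall>x. norm (a x) \<le> K * norm x" by (auto simp: bounded_op_def)
  qed
  then obtain Kb where Kb0: "\<forall>a\<in>F. \<forall>x. norm (a x) \<le> Kb a * norm x"
    by (rule bchoice[THEN exE]) blast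
  then have Kb: "\<And>a x. a \<in> F \<Longrightarrow> norm (a x) \<le> Kb a * norm x" by auto
  define M where "M = 1 + (\<Sum>a\<in>F. (Kb a)\<^sup>2)"
  have M: "M \<ge> 1" unfolding M_def by (simp add: sum_nonneg)
  define H where "H = (\<lambda>x. (1 / M) *\<^sub>R (\<Sum>a\<in>F. adj a (a x)))"
  have HI: "H \<in> I" unfolding H_def
  proof (rule li_sR[OF I], rule li_sum[OF I])
    fix a assume a: "a \<in> F"
    show "(\<lambda>x. adj a (a x)) \<in> I" by (rule li_comp[OF I adj(1)[OF a]]) (use a F(3) in auto)
  qed
  have HR: "H \<in> R" by (rule li_sub[OF I HI])
  have hb: "bop H" by (rule vna_bop[OF R HR])
  have e1: "cinner (adj a (a x)) y = cinner (a x) (a y)" if "a \<in> F" for a x y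
  proof -
    have "cinner (adj a (a x)) y = cnj (cinner y (adj a (a x)))" by (rule cinner_commute)
    also have "\<dots> = cnj (cinner (a y) (a x))" using adj(2)[OF that, of y "a x"] by simp
    also have "\<dots> = cinner (a x) (a y)" using cinner_commute[of "a x" "a y"] by simp
    finally show ?thesis .
  qed
  have cH: "cinner (H x) y = complex_of_real (1 / M) * (\<Sum>a\<in>F. cinner (a x) (a y))" for x y
    by (simp add: H_def cinner_scaleR_left cinner_sum_left e1)
  have sa: "sa H"
  proof -
    have "cinner (H x) y = cinner x (H y)" for x y
    proof -
      have "cinner x (H y) = complex_of_real (1 / M) * (\<Sum>a\<in>F. cinner x (adj a (a y)))"
        by (simp add: H_def cinner_scaleR_right cinner_sum_right)
      also have "\<dots> = complex_of_real (1 / M) * (\<Sum>a\<in>F. cinner (a x) (a y))"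
        using adj(2) by simp
      finally show ?thesis using cH by simp
    qed
    then show ?thesis by (simp add: sa_def)
  qed
  have re: "Re (cinner (H x) x) = (1 / M) * (\<Sum>a\<in>F. (norm (a x))\<^sup>2)" for x
    by (simp add: cH Re_cinner_self)
  have "pos01 H"
    unfolding pos01_def
  proof (intro conjI allI hb sa)
    fix x
    show "0 \<le> Re (cinner (H x) x)" using M by (simp add: re sum_nonneg)
    have "(\<Sum>a\<in>F. (norm (a x))\<^sup>2) \<le> (\<Sum>a\<in>F. (Kb a)\<^sup>2 * (norm x)\<^sup>2)"
    proof (rule sum_mono)
      fix a assume a: "a \<in> F"
      have "(norm (a x))\<^sup>2 \<le> (Kb a * norm x)\<^sup>2"
        using Kb[OF a, of x] by (intro power_mono) auto
      then show "(norm (a x))\<^sup>2 \<le> (Kb a)\<^sup>2 * (norm x)\<^sup>2" by (simp add: power_mult_distrib)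
    qed
    also have "\<dots> = (M - 1) * (norm x)\<^sup>2" by (simp add: M_def sum_distrib_right)
    also have "\<dots> \<le> M * (norm x)\<^sup>2" by (rule mult_right_mono) simp_all
    finally show "Re (cinner (H x) x) \<le> (norm x)\<^sup>2" using M by (simp add: re field_simps)
  qed
  then show ?thesis using HI M re by blast
qed

end

context complex_hilbert_space
begin

lemma sa_sq_norm: "sa S \<Longrightarrow> Re (cinner (S (S x)) x) = (norm (S x))\<^sup>2"
  using saD[of S "S x" x] by (simp add: Re_cinner_self)

lemma main_thm:
  assumes R: "vna R" and I: "left_ideal scaleC R I" and nc: "norm_closed scaleC I"
    and fg: "finitely_generated_left_ideal scaleC R I"
  shows "wot_closed scaleC cinner I"
proof -
  obtain F where F: "finite F" "F \<subseteq> R" "I = left_ideal_generated scaleC R F"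
    using fg by (auto simp: finitely_generated_left_ideal_def)
  have FI: "F \<subseteq> I" using F(3) by (auto simp: left_ideal_generated_def)
  have rep: "\<And>T. T \<in> I \<Longrightarrow> \<exists>B. (\<forall>a\<in>F. B a \<in> R) \<and> T = (\<lambda>x. \<Sum>a\<in>F. B a (a x))"
    using gen_rep[OF R F(1) F(2)] F(3) by blast
  have ker: "\<And>T. T \<in> I \<Longrightarrow> T \<in> R \<and> (\<forall>x. (\<forall>a\<in>F. a x = 0) \<longrightarrow> T x = 0)"
    using gen_ker[OF R F(2)] F(3) by blast
  obtain H M where HI: "H \<in> I" and pH: "pos01 H" and M: "M \<ge> 1"
    and re: "\<And>x. Re (cinner (H x) x) = (1 / M) * (\<Sum>a\<in>F. (norm (a x))\<^sup>2)"
    using H_exists[OF R F(1) F(2) FI I] by blast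
  have HR: "H \<in> R" by (rule li_sub[OF I HI])
  have hb: "bop H" and saH: "sa H" using pH by (auto simp: pos01_def)
  have sumM: "(\<Sum>a\<in>F. (norm (a x))\<^sup>2) = M * Re (cinner (H x) x)" for x
    using M by (simp add: re)
  have pY: "pos01 (cmp H)" by (rule pos01_cmp[OF pH])
  have YR: "cmp H \<in> R" unfolding cmp_def by (rule vna_diff[OF R vna_id[OF R] HR])
  have cY: "(\<lambda>x. x - cmp H x) \<in> I" using HI by (simp add: cmp_apply)
  define S where "S = Sq (cmp H)"
  have SI: "S \<in> I" unfolding S_def by (rule Sq_in[OF R I nc pY YR cY])
  have SR: "S \<in> R" by (rule li_sub[OF I SI])
  have pS: "pos01 S" unfolding S_def by (rule Sq_pos01[OF pY])
  have sb: "bop S" and saS: "sa S" using pS by (auto simp: pos01_def)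
  have SS: "S (S x) = H x" for x unfolding S_def by (simp add: Sq_sq[OF pY] cmp_apply)
  have pY2: "pos01 (cmp S)" by (rule pos01_cmp[OF pS])
  have Y2R: "cmp S \<in> R" unfolding cmp_def by (rule vna_diff[OF R vna_id[OF R] SR])
  have cY2: "(\<lambda>x. x - cmp S x) \<in> I" using SI by (simp add: cmp_apply)
  define Q where "Q = Sq (cmp S)"
  have QI: "Q \<in> I" unfolding Q_def by (rule Sq_in[OF R I nc pY2 Y2R cY2])
  have pQ: "pos01 Q" unfolding Q_def by (rule Sq_pos01[OF pY2])
  have saQ: "sa Q" using pQ by (auto simp: pos01_def)
  have QQ: "Q (Q x) = S x" for x unfolding Q_def by (simp add: Sq_sq[OF pY2] cmp_apply)
  have HS: "H (S x) = S (H x)" for x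
    unfolding S_def by (rule Sq_commute[OF pY hb cmp_commute[OF hb]])
  have SQ: "S (Q x) = Q (S x)" for x
    unfolding Q_def by (rule Sq_commute[OF pY2 sb cmp_commute[OF sb]])
  have hS: "Re (cinner (H x) x) = (norm (S x))\<^sup>2" for x
    using sa_sq_norm[OF saS, of x] SS by simp
  obtain B where B: "\<forall>a\<in>F. B a \<in> R" "Q = (\<lambda>x. \<Sum>a\<in>F. B a (a x))" using rep[OF QI] by blast
  have "\<forall>a\<in>F. \<exists>K. K \<ge> 0 \<and> (\<forall>x. norm (B a x) \<le> K * norm x)"
  proof
    fix a assume "a \<in> F"
    then have "bop (B a)" using B(1) vna_bop[OF R] by blast
    then obtain K where "K > 0" "\<And>x. norm (B a x) \<le> K * norm x" using bop_bound by blast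
    then show "\<exists>K. K \<ge> 0 \<and> (\<forall>x. norm (B a x) \<le> K * norm x)" by (auto intro!: exI[of _ K])
  qed
  then obtain Kq where Kq0: "\<forall>a\<in>F. Kq a \<ge> 0 \<and> (\<forall>x. norm (B a x) \<le> Kq a * norm x)"
    by (rule bchoice[THEN exE]) blast
  define G where "G = (\<Sum>a\<in>F. Kq a)"
  have G0: "G \<ge> 0" unfolding G_def using Kq0 by (simp add: sum_nonneg)
  define K where "K = G\<^sup>2 * M + 1"
  have K1: "K \<ge> 1" unfolding K_def using M by simp
  have h0: "Re (cinner (H x) x) \<ge> 0" for x using pH by (simp add: pos01_def)
  have Qb: "(norm (Q x))\<^sup>2 \<le> G\<^sup>2 * M * Re (cinner (H x) x)" for x
  proof -
    let ?h = "Re (cinner (H x) x)"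
    have ab: "norm (a x) \<le> sqrt (M * ?h)" if a: "a \<in> F" for a
    proof -
      have "(norm (a x))\<^sup>2 \<le> (\<Sum>a\<in>F. (norm (a x))\<^sup>2)"
        using member_le_sum[OF a, of "\<lambda>a. (norm (a x))\<^sup>2"] F(1) by simp
      then have "(norm (a x))\<^sup>2 \<le> M * ?h" by (simp add: sumM)
      then show ?thesis by (simp add: real_le_rsqrt)
    qed
    have "norm (Q x) \<le> (\<Sum>a\<in>F. norm (B a (a x)))" unfolding B(2) by (rule norm_sum)
    also have "\<dots> \<le> (\<Sum>a\<in>F. Kq a * sqrt (M * ?h))"
    proof (rule sum_mono)
      fix a assume a: "a \<in> F"
      have "norm (B a (a x)) \<le> Kq a * norm (a x)" using Kq0 a by blast
      also have "\<dots> \<le> Kq a * sqrt (M * ?h)" using ab[OF a] Kq0 a by (intro mult_left_mono) auto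
      finally show "norm (B a (a x)) \<le> Kq a * sqrt (M * ?h)" .
    qed
    also have "\<dots> = G * sqrt (M * ?h)" by (simp add: G_def sum_distrib_right)
    finally have "norm (Q x) \<le> G * sqrt (M * ?h)" .
    then have "(norm (Q x))\<^sup>2 \<le> (G * sqrt (M * ?h))\<^sup>2" by (intro power_mono) auto
    also have "\<dots> = G\<^sup>2 * M * ?h" using M h0[of x] by (simp add: power_mult_distrib)
    finally show ?thesis .
  qed
  have G1: "Re (cinner (S x) x) \<le> K * (norm (S x))\<^sup>2" for x
  proof -
    have "Re (cinner (S x) x) = (norm (Q x))\<^sup>2" using sa_sq_norm[OF saQ, of x] QQ by simp
    also have "\<dots> \<le> G\<^sup>2 * M * (norm (S x))\<^sup>2" using Qb[of x] hS[of x] by simp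
    also have "\<dots> \<le> K * (norm (S x))\<^sup>2" unfolding K_def by (simp add: distrib_right)
    finally show ?thesis .
  qed
  have G2: "Re (cinner (H x) x) \<le> K\<^sup>2 * (norm (H x))\<^sup>2" for x
  proof -
    have a: "(norm (S x))\<^sup>2 = Re (cinner (S (Q x)) (Q x))"
    proof -
      have "cinner (S (Q x)) (Q x) = cinner (Q (S (Q x))) x" using saD[OF saQ, of "S (Q x)" x] by simp
      also have "Q (S (Q x)) = S (S x)" using SQ[of "Q x"] QQ by simp
      finally show ?thesis using sa_sq_norm[OF saS, of x] by simp
    qed
    have c: "(norm (S (Q x)))\<^sup>2 = Re (cinner (S (S x)) (S x))"
    proof -
      have "(norm (S (Q x)))\<^sup>2 = (norm (Q (S x)))\<^sup>2" by (simp add: SQ)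
      also have "\<dots> = Re (cinner (Q (Q (S x))) (S x))" by (rule sa_sq_norm[OF saQ, symmetric])
      finally show ?thesis by (simp add: QQ)
    qed
    have "Re (cinner (H x) x) = (norm (S x))\<^sup>2" by (rule hS)
    also have "\<dots> \<le> K * (norm (S (Q x)))\<^sup>2" using G1[of "Q x"] a by simp
    also have "\<dots> \<le> K * (K * (norm (S (S x)))\<^sup>2)" using G1[of "S x"] c K1 by (intro mult_left_mono) auto
    finally show ?thesis by (simp add: SS power2_eq_square mult.assoc)
  qed
  have G3: "(norm (H z))\<^sup>2 \<le> K\<^sup>2 * Re (cinner (H (H z)) (H z))" for z
  proof -
    have e1: "Re (cinner (H (S z)) (S z)) = (norm (H z))\<^sup>2"
    proof -
      have "cinner (H (S z)) (S z) = cinner (S (H (S z))) z" using saD[OF saS, of "H (S z)" z] by simp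
      also have "S (H (S z)) = H (H z)" using HS[of "S z"] SS by simp
      finally show ?thesis using sa_sq_norm[OF saH, of z] by simp
    qed
    have e2: "(norm (H (S z)))\<^sup>2 = Re (cinner (H (H z)) (H z))"
    proof -
      have "(norm (H (S z)))\<^sup>2 = (norm (S (H z)))\<^sup>2" by (simp add: HS)
      also have "\<dots> = Re (cinner (S (S (H z))) (H z))" by (rule sa_sq_norm[OF saS, symmetric])
      finally show ?thesis by (simp add: SS)
    qed
    show ?thesis using G2[of "S z"] e1 e2 by simp
  qed
  have G4: "(norm (H w))\<^sup>2 \<le> Re (cinner (H w) w)" for w
  proof -
    have "norm (H w) \<le> norm (S w)" using pos01_norm[OF pS, of "S w"] SS by simp
    then have "(norm (H w))\<^sup>2 \<le> (norm (S w))\<^sup>2" by (intro power_mono) auto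
    then show ?thesis by (simp add: hS)
  qed
  define r where "r = 1 - 1 / K\<^sup>2"
  have r: "0 \<le> r" "r < 1" using K1 by (auto simp: r_def power_le_one_iff)
  have c1: "(norm (cmp H (H z)))\<^sup>2 \<le> r * (norm (H z))\<^sup>2" for z
    unfolding r_def by (rule contract1[OF pH K1 G3 G4])
  have JI: "T \<in> I" if TR: "T \<in> R" and Tk: "\<forall>x. (\<forall>a\<in>F. a x = 0) \<longrightarrow> T x = 0" for T
  proof (rule nc_approx[OF nc])
    have tb: "bop T" by (rule vna_bop[OF R TR])
    then show "bop T" .
    obtain Kt where Kt: "Kt > 0" "\<And>x. norm (T x) \<le> Kt * norm x" using bop_bound[OF tb] by blast
    fix \<epsilon> :: real assume e: "\<epsilon> > 0"
    define q where "q = sqrt r"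
    have q: "0 \<le> q" "q < 1" using r by (auto simp: q_def)
    have L: "(\<lambda>n. 2 * Kt * q ^ n) \<longlonglongrightarrow> 2 * Kt * 0"
      using q by (intro tendsto_mult tendsto_const LIMSEQ_power_zero) simp
    obtain n where n: "\<bar>2 * Kt * q ^ n\<bar> < \<epsilon>" using LIMSEQ_D[OF L e] by auto
    define Gn where "Gn = (\<lambda>y. T (\<Sum>j<n. (cmp H ^^ j) y))"
    have GnR: "Gn \<in> R" unfolding Gn_def
      by (rule vna_comp[OF R TR vna_sum[OF R vna_pow[OF R YR]]])
    have AI: "(\<lambda>x. Gn (H x)) \<in> I" by (rule li_comp[OF I GnR HI])
    have Aeq: "Gn (H x) = T x - T ((cmp H ^^ n) x)" for x
    proof -
      have "T x - T ((cmp H ^^ n) x) = T (x - (cmp H ^^ n) x)" by (simp add: bop_diff[OF tb])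
      also have "x - (cmp H ^^ n) x = H (\<Sum>j<n. (cmp H ^^ j) x)" by (rule cmp_diff_range[OF hb])
      also have "\<dots> = (\<Sum>j<n. (cmp H ^^ j) (H x))" by (simp add: bop_sum[OF hb] cmp_pow_commute[OF hb])
      finally show ?thesis by (simp add: Gn_def)
    qed
    show "\<exists>A\<in>I. \<forall>x. norm (T x - A x) \<le> \<epsilon> * norm x"
    proof (intro bexI[OF _ AI] allI)
      fix x
      obtain p where p: "H p = 0" "\<And>n. norm ((cmp H ^^ n) x - p) \<le> 2 * sqrt r ^ n * norm x"
        using proj_exists[OF pH r c1, of x] by blast
      have "(\<Sum>a\<in>F. (norm (a p))\<^sup>2) = 0" using sumM[of p] p(1) by simp
      then have "\<forall>a\<in>F. (norm (a p))\<^sup>2 = 0" using F(1) by (simp add: sum_nonneg_eq_0_iff)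
      then have "T p = 0" using Tk by simp
      then have "T ((cmp H ^^ n) x) = T ((cmp H ^^ n) x - p)" by (simp add: bop_diff[OF tb])
      then have "norm (T x - Gn (H x)) = norm (T ((cmp H ^^ n) x - p))" by (simp add: Aeq)
      also have "\<dots> \<le> Kt * norm ((cmp H ^^ n) x - p)" by (rule Kt(2))
      also have "\<dots> \<le> Kt * (2 * q ^ n * norm x)" using p(2)[of n] Kt(1) by (simp add: q_def)
      also have "\<dots> = (2 * Kt * q ^ n) * norm x" by simp
      also have "\<dots> \<le> \<epsilon> * norm x" using n by (intro mult_right_mono) auto
      finally show "norm (T x - Gn (H x)) \<le> \<epsilon> * norm x" .
    qed
  qed
  show ?thesis
    unfolding wot_closed_def
  proof (intro allI impI, elim conjE)
    fix T assume tb: "bop T"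
      and ap: "\<forall>\<epsilon>>0. \<forall>P. finite P \<longrightarrow> (\<exists>A\<in>I. \<forall>(x, y)\<in>P. cmod (cinner (T x - A x) y) < \<epsilon>)"
    have "T \<in> R"
    proof -
      have "\<forall>\<epsilon>>0. \<forall>P. finite P \<longrightarrow> (\<exists>A\<in>R. \<forall>(x, y)\<in>P. cmod (cinner (T x - A x) y) < \<epsilon>)"
      proof (intro allI impI)
        fix \<epsilon> :: real and P :: "('h \<times> 'h) set" assume "\<epsilon> > 0" "finite P"
        then obtain A where "A \<in> I" "\<forall>(x, y)\<in>P. cmod (cinner (T x - A x) y) < \<epsilon>" using ap by blast
        then show "\<exists>A\<in>R. \<forall>(x, y)\<in>P. cmod (cinner (T x - A x) y) < \<epsilon>" using li_sub[OF I] by blast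
      qed
      then show ?thesis using vna_wot[OF R] tb unfolding wot_closed_def by blast
    qed
    moreover have "\<forall>x. (\<forall>a\<in>F. a x = 0) \<longrightarrow> T x = 0"
    proof (intro allI impI)
      fix x assume x: "\<forall>a\<in>F. a x = 0"
      show "T x = 0"
      proof (rule ccontr)
        assume "T x \<noteq> 0"
        then have pos: "(norm (T x))\<^sup>2 > 0" by simp
        obtain A where A: "A \<in> I" "\<forall>(u, v)\<in>{(x, T x)}. cmod (cinner (T u - A u) v) < (norm (T x))\<^sup>2"
        proof -
          have "finite {(x, T x)}" by simp
          then show ?thesis using ap pos that by blast
        qed
        have "A x = 0" using ker[OF A(1)] x by blast
        then have "cmod (cinner (T x) (T x)) < (norm (T x))\<^sup>2" using A(2) by simp
        then show False by (simp only: cinner_self_norm norm_of_real)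
      qed
    qed
    ultimately show "T \<in> I" by (rule JI)
  qed
qed

end

theorem corollary3p6:
  fixes scaleC :: "complex \<Rightarrow> 'h::banach \<Rightarrow> 'h"
    and cinner :: "'h \<Rightarrow> 'h \<Rightarrow> complex"
    and R I :: "('h \<Rightarrow> 'h) set"
  assumes "complex_hilbert_space scaleC cinner"
    and "von_neumann_algebra scaleC cinner R"
    and "left_ideal scaleC R I"
    and "norm_closed scaleC I"
    and "finitely_generated_left_ideal scaleC R I"
  shows "wot_closed scaleC cinner I"
  by (rule complex_hilbert_space.main_thm[OF assms])

end
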